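(* Let $\alpha>0$ and $p_0=\frac12\chi_{(-1,1)}$. Then $p_0$ satisfies $p_0\in L^1(\mathbb{R})\cap L^\infty(\mathbb{R})$, $p_0\ge0$, $\int_{\mathbb{R}}p_0=1$, $\int_{\mathbb{R}}|\sigma|p_0<+\infty$, $D(p_0)=0$, and $\int_0^1\frac{dx}{F_{p_0}(x)}<+\infty$. Consequently the problem $$\partial_t u=D(u(t))\,\partial^2_{\sigma\sigma}u,\qquad u(0,\sigma)=\tfrac12\chi_{(-1,1)}(\sigma)$$ has infinitely many solutions in $C^0([0,+\infty);L^2(\mathbb{R}))$.
   Context: $\chi_{(-1,1)}$ is the characteristic function of $(-1,1)$. For $f\in L^1(\mathbb{R})$, $D(f)=\alpha\int_{|\sigma|>1}f(\sigma)\,d\sigma$. For $\eta>0$, $\varphi_\eta(x)=\frac{1}{\sqrt{2\pi}\eta}e^{-x^2/(2\eta^2)}$. $F_{p_0}:[0,+\infty)\to[0,+\infty)$ is defined by $F_{p_0}(0)=D(p_0)$ and, for $x>0$, $F_{p_0}(x)=\alpha\int_{|\sigma|>1}\Big(\int_{\mathbb{R}}p_0(\sigma')\varphi_{\sqrt{2x}}(\sigma-\sigma')\,d\sigma'\Big)d\sigma$. The equation is understood in the sense of distributions. *)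

theory Defs
  imports "HOL-Analysis.Analysis"
begin

definition Dfun :: "real \<Rightarrow> (real \<Rightarrow> real) \<Rightarrow> real" where
  "Dfun \<alpha> f = \<alpha> * (LINT \<sigma>:{\<sigma>. 1 < \<bar>\<sigma>\<bar>}|lborel. f \<sigma>)"

definition gauss :: "real \<Rightarrow> real \<Rightarrow> real" where
  "gauss \<eta> x = exp (- x\<^sup>2 / (2 * \<eta>\<^sup>2)) / (sqrt (2 * pi) * \<eta>)"

definition Ffun :: "real \<Rightarrow> (real \<Rightarrow> real) \<Rightarrow> real \<Rightarrow> real" where
  "Ffun \<alpha> p0 x = (if x = 0 then Dfun \<alpha> p0
     else \<alpha> * (LINT \<sigma>:{\<sigma>. 1 < \<bar>\<sigma>\<bar>}|lborel.
                 (LINT \<sigma>'|lborel. p0 \<sigma>' * gauss (sqrt (2 * x)) (\<sigma> - \<sigma>'))))"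

text \<open>C-infinity functions of two real variables (t, sigma): all partial derivatives
  of all orders exist everywhere and are continuous (coinductive closure).\<close>
coinductive smooth2 :: "(real \<Rightarrow> real \<Rightarrow> real) \<Rightarrow> bool" where
  "\<lbrakk> continuous_on UNIV (\<lambda>z. f (fst z) (snd z));
     \<And>t s. ((\<lambda>\<tau>. f \<tau> s) has_real_derivative f1 t s) (at t);
     \<And>t s. ((\<lambda>\<rho>. f t \<rho>) has_real_derivative f2 t s) (at s);
     smooth2 f1; smooth2 f2 \<rbrakk> \<Longrightarrow> smooth2 f"

definition pd_t :: "(real \<Rightarrow> real \<Rightarrow> real) \<Rightarrow> real \<Rightarrow> real \<Rightarrow> real" where
  "pd_t f t s = deriv (\<lambda>\<tau>. f \<tau> s) t"

definition pd_s :: "(real \<Rightarrow> real \<Rightarrow> real) \<Rightarrow> real \<Rightarrow> real \<Rightarrow> real" where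
  "pd_s f t s = deriv (\<lambda>\<rho>. f t \<rho>) s"

definition test_fun :: "(real \<Rightarrow> real \<Rightarrow> real) \<Rightarrow> bool" where
  "test_fun \<phi> \<longleftrightarrow> smooth2 \<phi> \<and>
     (\<exists>a b R. 0 < a \<and> (\<forall>t s. \<phi> t s \<noteq> 0 \<longrightarrow> a \<le> t \<and> t \<le> b \<and> \<bar>s\<bar> \<le> R))"

definition C0_L2 :: "(real \<Rightarrow> real \<Rightarrow> real) \<Rightarrow> bool" where
  "C0_L2 u \<longleftrightarrow>
     (\<forall>t\<ge>0. u t \<in> borel_measurable lborel \<and> integrable lborel (\<lambda>s. (u t s)\<^sup>2)) \<and>
     (\<forall>t0\<ge>0. ((\<lambda>t. LINT s|lborel. (u t s - u t0 s)\<^sup>2) \<longlongrightarrow> 0) (at t0 within {0..}))"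

text \<open>Distributional solution of  u_t = D(u(t)) u_{ss},  u(0) = p0,
  in C^0([0,+infinity); L^2(R)).  D(u(t)) requires u(t) in L^1.\<close>
definition is_solution :: "real \<Rightarrow> (real \<Rightarrow> real) \<Rightarrow> (real \<Rightarrow> real \<Rightarrow> real) \<Rightarrow> bool" where
  "is_solution \<alpha> p0 u \<longleftrightarrow>
     C0_L2 u \<and>
     (\<forall>t\<ge>0. integrable lborel (u t)) \<and>
     (AE s in lborel. u 0 s = p0 s) \<and>
     (\<forall>\<phi>. test_fun \<phi> \<longrightarrow>
        (let g = (\<lambda>(t, s). u t s * (pd_t \<phi> t s + Dfun \<alpha> (u t) * pd_s (pd_s \<phi>) t s))
         in integrable (lborel \<Otimes>\<^sub>M lborel) g \<and> integral\<^sup>L (lborel \<Otimes>\<^sub>M lborel) g = 0))"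

end

theory Submission
  imports Defs "HOL-Probability.Distributions"
begin

definition pz :: "real \<Rightarrow> real" where
  "pz \<sigma> = indicator {-1<..<1} \<sigma> / 2"

lemma pz_meas[measurable]: "pz \<in> borel_measurable borel"
  unfolding pz_def[abs_def] by measurable

lemma pz_nonneg: "0 \<le> pz x" and pz_le: "pz x \<le> 1/2"
  by (auto simp: pz_def indicator_def)

lemma integrable_pz: "integrable lborel pz"
proof -
  have "integrable lborel (\<lambda>x. indicator {-1<..<1::real} x / (2::real))"
    by (intro integrable_divide) auto
  then show ?thesis by (simp add: pz_def[abs_def])
qed

lemma integral_pz: "(LINT x|lborel. pz x) = 1"
  by (simp add: pz_def[abs_def])

lemma nn_integral_pz: "(\<integral>\<^sup>+x. ennreal (pz x) \<partial>lborel) = 1"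
  using nn_integral_eq_integral[OF integrable_pz] pz_nonneg integral_pz by simp

definition V :: "real \<Rightarrow> real \<Rightarrow> real" where
  "V c s = (LINT z|lborel. pz (s - c*z) * std_normal_density z)"

lemma pz_mult_le: "0 \<le> (d::real) \<Longrightarrow> \<bar>pz y * d\<bar> * 2 \<le> d"
  using mult_right_mono[OF pz_le[of y], of d] pz_nonneg[of y] by (simp add: abs_mult)

lemma V_integrable_pt: "integrable lborel (\<lambda>z. pz (s - c*z) * std_normal_density z)"
  by (rule Bochner_Integration.integrable_bound[where f="\<lambda>z. std_normal_density z / 2"])
     (auto intro!: integrable_divide AE_I2 simp: pz_mult_le[OF normal_density_nonneg])

lemma V_0: "V 0 s = pz s"
  by (simp add: V_def)

lemma V_nonneg: "0 \<le> V c s"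
  unfolding V_def by (intro integral_nonneg_AE AE_I2 mult_nonneg_nonneg pz_nonneg) auto

lemma pz_mult_le2: "0 \<le> (d::real) \<Longrightarrow> pz y * d \<le> d / 2"
  using mult_right_mono[OF pz_le[of y], of d] by simp

lemma pz_mult_le3: "0 \<le> (d::real) \<Longrightarrow> pz y * d * 2 \<le> d"
  using pz_mult_le2[of d y] by simp

lemma V_le: "V c s \<le> 1/2"
proof -
  have "V c s \<le> (LINT z|lborel. std_normal_density z / 2)"
    unfolding V_def
    by (intro integral_mono V_integrable_pt integrable_divide integrable_normal_density)
       (auto simp: pz_mult_le3)
  then show ?thesis by simp
qed

lemma V_meas[measurable]: "(\<lambda>x. V (fst x) (snd x)) \<in> borel_measurable (borel \<Otimes>\<^sub>M borel)"
proof -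
  have "(\<lambda>x. LINT z|lborel. pz (snd x - fst x*z) * std_normal_density z) \<in> borel_measurable (borel \<Otimes>\<^sub>M borel)"
    by measurable
  then show ?thesis by (simp add: V_def)
qed

lemma V_meas1[measurable]: "V c \<in> borel_measurable borel"
proof -
  have "(\<lambda>s. LINT z|lborel. pz (s - c*z) * std_normal_density z) \<in> borel_measurable borel"
    by measurable
  then show ?thesis by (simp add: V_def[abs_def])
qed

lemma nn_std_normal: "(\<integral>\<^sup>+z. ennreal (std_normal_density z) \<partial>lborel) = 1"
  using nn_integral_eq_integral[OF integrable_normal_density[of 1 0] AE_I2[OF normal_density_nonneg]] integral_normal_density[of 1 0] by simp

lemma nn_pz_shift: "(\<integral>\<^sup>+s. ennreal (pz (s - a)) \<partial>lborel) = 1"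
  using nn_integral_real_affine[of "\<lambda>x. ennreal (pz x)" 1 "-a"] nn_integral_pz by simp

lemma nn_V: "(\<integral>\<^sup>+s. ennreal (V c s) \<partial>lborel) = 1"
proof -
  have "(\<integral>\<^sup>+s. ennreal (V c s) \<partial>lborel) =
      (\<integral>\<^sup>+s. (\<integral>\<^sup>+z. ennreal (pz (s - c*z) * std_normal_density z) \<partial>lborel) \<partial>lborel)"
    unfolding V_def
    by (intro nn_integral_cong nn_integral_eq_integral[symmetric] V_integrable_pt AE_I2
         mult_nonneg_nonneg pz_nonneg) auto
  also have "\<dots> = (\<integral>\<^sup>+z. (\<integral>\<^sup>+s. ennreal (pz (s - c*z) * std_normal_density z) \<partial>lborel) \<partial>lborel)"
    by (rule lborel_pair.Fubini'[where f="\<lambda>z s. ennreal (pz (s - c*z) * std_normal_density z)"]) measurable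
  also have "\<dots> = (\<integral>\<^sup>+z. ennreal (std_normal_density z) \<partial>lborel)"
  proof (intro nn_integral_cong)
    fix z
    have "(\<integral>\<^sup>+s. ennreal (pz (s - c*z) * std_normal_density z) \<partial>lborel)
        = (\<integral>\<^sup>+s. ennreal (pz (s - c*z)) * ennreal (std_normal_density z) \<partial>lborel)"
      by (intro nn_integral_cong) (simp add: ennreal_mult pz_nonneg)
    also have "\<dots> = (\<integral>\<^sup>+s. ennreal (pz (s - c*z)) \<partial>lborel) * ennreal (std_normal_density z)"
      by (rule nn_integral_multc) measurable
    finally show "(\<integral>\<^sup>+s. ennreal (pz (s - c*z) * std_normal_density z) \<partial>lborel) = ennreal (std_normal_density z)"
      using nn_pz_shift[of "c*z"] by simp
  qed
  finally show ?thesis using nn_std_normal by simp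
qed

lemma integrable_V: "integrable lborel (V c)" and integral_V: "(LINT s|lborel. V c s) = 1"
  using nn_integral_eq_integrable[of "V c" lborel 1] nn_V V_nonneg by auto

lemma pz_shift_diff:
  "\<bar>pz (x + h) - pz x\<bar> \<le> (indicator {-1-\<bar>h\<bar>..-1+\<bar>h\<bar>} x + indicator {1-\<bar>h\<bar>..1+\<bar>h\<bar>} x) / 2"
  by (auto simp: pz_def indicator_def abs_if split: if_splits)

lemma nn_pz_shift_diff:
  "(\<integral>\<^sup>+s. ennreal \<bar>pz (s - a) - pz (s - b)\<bar> \<partial>lborel) \<le> ennreal (2 * \<bar>a - b\<bar>)"
proof -
  define h where "h = b - a"
  let ?B = "\<lambda>x. (indicator {-1-\<bar>h\<bar>..-1+\<bar>h\<bar>} x + indicator {1-\<bar>h\<bar>..1+\<bar>h\<bar>} x) / (2::real)"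
  have intB: "integrable lborel ?B"
    by (intro integrable_divide integrable_add) auto
  have "(\<integral>\<^sup>+s. ennreal \<bar>pz (s - a) - pz (s - b)\<bar> \<partial>lborel)
      = (\<integral>\<^sup>+x. ennreal \<bar>pz (b + 1 * x - a) - pz (b + 1 * x - b)\<bar> \<partial>lborel)"
    using nn_integral_real_affine[of "\<lambda>s. ennreal \<bar>pz (s - a) - pz (s - b)\<bar>" 1 b] by simp
  also have "\<dots> = (\<integral>\<^sup>+x. ennreal \<bar>pz (x + h) - pz x\<bar> \<partial>lborel)"
    by (intro nn_integral_cong) (simp add: h_def algebra_simps)
  also have "\<dots> \<le> (\<integral>\<^sup>+x. ennreal (?B x) \<partial>lborel)"
    by (intro nn_integral_mono ennreal_leI pz_shift_diff)
  also have "\<dots> = ennreal (LINT x|lborel. ?B x)"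
    by (intro nn_integral_eq_integral intB AE_I2) auto
  also have "(LINT x|lborel. ?B x) = 2 * \<bar>h\<bar>"
    by (simp add: integral_add)
  finally show ?thesis by (simp add: h_def abs_minus_commute)
qed

lemma nn_V_diff_pt:
  "ennreal \<bar>V c1 s - V c2 s\<bar> \<le> (\<integral>\<^sup>+z. ennreal (\<bar>pz (s - c1*z) - pz (s - c2*z)\<bar> * std_normal_density z) \<partial>lborel)"
proof -
  have int: "integrable lborel (\<lambda>z. (pz (s - c1*z) - pz (s - c2*z)) * std_normal_density z)"
    using V_integrable_pt[of s c1] V_integrable_pt[of s c2]
    by (simp add: left_diff_distrib)
  have "V c1 s - V c2 s = (LINT z|lborel. (pz (s - c1*z) - pz (s - c2*z)) * std_normal_density z)"
    unfolding V_def left_diff_distrib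
    by (rule Bochner_Integration.integral_diff[symmetric]) (rule V_integrable_pt)+
  also have "\<bar>\<dots>\<bar> \<le> (LINT z|lborel. \<bar>(pz (s - c1*z) - pz (s - c2*z)) * std_normal_density z\<bar>)"
    by (rule integral_abs_bound)
  finally have "\<bar>V c1 s - V c2 s\<bar> \<le> (LINT z|lborel. \<bar>pz (s - c1*z) - pz (s - c2*z)\<bar> * std_normal_density z)"
    by (simp add: abs_mult)
  then have "ennreal \<bar>V c1 s - V c2 s\<bar> \<le> ennreal (LINT z|lborel. \<bar>pz (s - c1*z) - pz (s - c2*z)\<bar> * std_normal_density z)"
    by (rule ennreal_leI)
  also have "\<dots> = (\<integral>\<^sup>+z. ennreal (\<bar>pz (s - c1*z) - pz (s - c2*z)\<bar> * std_normal_density z) \<partial>lborel)"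
    using integrable_abs[OF int]
    by (intro nn_integral_eq_integral[symmetric]) (auto simp: abs_mult)
  finally show ?thesis .
qed

lemma nn_V_diff:
  "(\<integral>\<^sup>+s. ennreal \<bar>V c1 s - V c2 s\<bar> \<partial>lborel) \<le> ennreal (2 * \<bar>c1 - c2\<bar> * sqrt (2/pi))"
proof -
  have "(\<integral>\<^sup>+s. ennreal \<bar>V c1 s - V c2 s\<bar> \<partial>lborel)
     \<le> (\<integral>\<^sup>+s. (\<integral>\<^sup>+z. ennreal (\<bar>pz (s - c1*z) - pz (s - c2*z)\<bar> * std_normal_density z) \<partial>lborel) \<partial>lborel)"
    by (intro nn_integral_mono nn_V_diff_pt)
  also have "\<dots> = (\<integral>\<^sup>+z. (\<integral>\<^sup>+s. ennreal (\<bar>pz (s - c1*z) - pz (s - c2*z)\<bar> * std_normal_density z) \<partial>lborel) \<partial>lborel)"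
    by (rule lborel_pair.Fubini'[where f="\<lambda>z s. ennreal (\<bar>pz (s - c1*z) - pz (s - c2*z)\<bar> * std_normal_density z)"]) measurable
  also have "\<dots> \<le> (\<integral>\<^sup>+z. ennreal (2 * \<bar>c1 - c2\<bar> * (std_normal_density z * \<bar>z\<bar>^(2*0+1))) \<partial>lborel)"
  proof (intro nn_integral_mono)
    fix z
    have "(\<integral>\<^sup>+s. ennreal (\<bar>pz (s - c1*z) - pz (s - c2*z)\<bar> * std_normal_density z) \<partial>lborel)
        = (\<integral>\<^sup>+s. ennreal \<bar>pz (s - c1*z) - pz (s - c2*z)\<bar> * ennreal (std_normal_density z) \<partial>lborel)"
      by (intro nn_integral_cong) (simp add: ennreal_mult)
    also have "\<dots> = (\<integral>\<^sup>+s. ennreal \<bar>pz (s - c1*z) - pz (s - c2*z)\<bar> \<partial>lborel) * ennreal (std_normal_density z)"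
      by (rule nn_integral_multc) measurable
    also have "\<dots> \<le> ennreal (2 * \<bar>c1*z - c2*z\<bar>) * ennreal (std_normal_density z)"
      by (intro mult_right_mono nn_pz_shift_diff) auto
    also have "\<dots> = ennreal (2 * \<bar>c1 - c2\<bar> * (std_normal_density z * \<bar>z\<bar>^(2*0+1)))"
      by (simp add: ennreal_mult[symmetric] abs_mult left_diff_distrib[symmetric] mult_ac)
    finally show "(\<integral>\<^sup>+s. ennreal (\<bar>pz (s - c1*z) - pz (s - c2*z)\<bar> * std_normal_density z) \<partial>lborel)
        \<le> ennreal (2 * \<bar>c1 - c2\<bar> * (std_normal_density z * \<bar>z\<bar>^(2*0+1)))" .
  qed
  also have "\<dots> = ennreal (LINT z|lborel. 2 * \<bar>c1 - c2\<bar> * (std_normal_density z * \<bar>z\<bar>^(2*0+1)))"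
    by (intro nn_integral_eq_integral integrable_mult_right AE_I2)
       (use integrable_std_normal_moment_abs[of 1] in auto)
  also have "(LINT z|lborel. 2 * \<bar>c1 - c2\<bar> * (std_normal_density z * \<bar>z\<bar>^(2*0+1))) = 2 * \<bar>c1 - c2\<bar> * sqrt (2/pi)"
    using integral_std_normal_moment_abs_odd[of 0] by simp
  finally show ?thesis .
qed

lemma V_diff_L1:
  "integrable lborel (\<lambda>s. \<bar>V c1 s - V c2 s\<bar>)"
  "(LINT s|lborel. \<bar>V c1 s - V c2 s\<bar>) \<le> 2 * \<bar>c1 - c2\<bar> * sqrt (2/pi)"
proof -
  show int: "integrable lborel (\<lambda>s. \<bar>V c1 s - V c2 s\<bar>)"
    by (intro integrable_abs Bochner_Integration.integrable_diff integrable_V)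
  have "ennreal (LINT s|lborel. \<bar>V c1 s - V c2 s\<bar>) = (\<integral>\<^sup>+s. ennreal \<bar>V c1 s - V c2 s\<bar> \<partial>lborel)"
    by (intro nn_integral_eq_integral[symmetric] int) auto
  also note nn_V_diff
  finally show "(LINT s|lborel. \<bar>V c1 s - V c2 s\<bar>) \<le> 2 * \<bar>c1 - c2\<bar> * sqrt (2/pi)"
    by (subst (asm) ennreal_le_iff) auto
qed

lemma gauss_eq: "0 < c \<Longrightarrow> gauss c (c*z) = std_normal_density z / c"
  by (simp add: gauss_def std_normal_density_def power_mult_distrib)

lemma conv_eq_V:
  assumes c: "0 < c"
  shows "(LINT \<sigma>'|lborel. pz \<sigma>' * gauss c (\<sigma> - \<sigma>')) = V c \<sigma>"
proof -
  have "(LINT \<sigma>'|lborel. pz \<sigma>' * gauss c (\<sigma> - \<sigma>')) =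
      \<bar>-c\<bar> *\<^sub>R (LINT z|lborel. pz (\<sigma> + -c * z) * gauss c (\<sigma> - (\<sigma> + -c * z)))"
    by (rule lborel_integral_real_affine) (use c in simp)
  also have "\<dots> = c * (LINT z|lborel. (pz (\<sigma> - c * z) * std_normal_density z) / c)"
    using c by (simp add: gauss_eq)
  also have "\<dots> = V c \<sigma>"
    using c by (simp add: V_def)
  finally show ?thesis .
qed

definition S1 :: "real set" where "S1 = {\<sigma>. 1 < \<bar>\<sigma>\<bar>}"

lemma S1_meas[measurable]: "S1 \<in> sets borel"
  unfolding S1_def by measurable

lemma Dfun_eq: "Dfun \<alpha> f = \<alpha> * (LINT \<sigma>|lborel. indicator S1 \<sigma> * f \<sigma>)"
  by (simp add: Dfun_def S1_def set_lebesgue_integral_def)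

lemma Ffun_eq:
  assumes "0 \<le> x"
  shows "Ffun \<alpha> pz x = Dfun \<alpha> (V (sqrt (2*x)))"
proof (cases "x = 0")
  case True
  then show ?thesis by (simp add: Ffun_def V_0[abs_def])
next
  case False
  with assms have "0 < sqrt (2*x)" by simp
  then show ?thesis using False
    by (simp add: Ffun_def Dfun_def conv_eq_V)
qed

lemma integrable_ind_Icc: "integrable lborel (indicator {l..r::real} :: real \<Rightarrow> real)"
  by (cases "l \<le> r") (auto simp: integrable_indicator_iff)

lemma integrable_ind_V: "integrable lborel (\<lambda>\<sigma>. indicator S1 \<sigma> * V c \<sigma>)"
  using integrable_real_mult_indicator[of S1 lborel "V c"] integrable_V by (simp add: mult.commute)

lemma Dfun_V_nonneg: "0 \<le> \<alpha> \<Longrightarrow> 0 \<le> Dfun \<alpha> (V c)"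
  unfolding Dfun_eq by (intro mult_nonneg_nonneg integral_nonneg_AE AE_I2) (auto simp: V_nonneg)

lemma Dfun_V_le: "0 \<le> \<alpha> \<Longrightarrow> Dfun \<alpha> (V c) \<le> \<alpha>"
proof -
  assume a: "0 \<le> \<alpha>"
  have "(LINT \<sigma>|lborel. indicator S1 \<sigma> * V c \<sigma>) \<le> (LINT \<sigma>|lborel. V c \<sigma>)"
    by (intro integral_mono integrable_ind_V integrable_V)
       (auto simp: indicator_def V_nonneg)
  then show ?thesis using a integral_V[of c]
    unfolding Dfun_eq by (simp add: mult_left_le)
qed

lemma Dfun_V_lip:
  "\<bar>Dfun \<alpha> (V c1) - Dfun \<alpha> (V c2)\<bar> \<le> \<bar>\<alpha>\<bar> * (2 * \<bar>c1 - c2\<bar> * sqrt (2/pi))"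
proof -
  have "\<bar>(LINT \<sigma>|lborel. indicator S1 \<sigma> * V c1 \<sigma>) - (LINT \<sigma>|lborel. indicator S1 \<sigma> * V c2 \<sigma>)\<bar>
      = \<bar>LINT \<sigma>|lborel. indicator S1 \<sigma> * V c1 \<sigma> - indicator S1 \<sigma> * V c2 \<sigma>\<bar>"
    by (subst Bochner_Integration.integral_diff) (auto intro: integrable_ind_V)
  also have "\<dots> \<le> (LINT \<sigma>|lborel. \<bar>indicator S1 \<sigma> * V c1 \<sigma> - indicator S1 \<sigma> * V c2 \<sigma>\<bar>)"
    by (rule integral_abs_bound)
  also have "\<dots> \<le> (LINT \<sigma>|lborel. \<bar>V c1 \<sigma> - V c2 \<sigma>\<bar>)"
    by (intro integral_mono V_diff_L1 integrable_abs Bochner_Integration.integrable_diff integrable_ind_V)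
       (auto simp: indicator_def)
  also have "\<dots> \<le> 2 * \<bar>c1 - c2\<bar> * sqrt (2/pi)" by (rule V_diff_L1)
  finally have *: "\<bar>(LINT \<sigma>|lborel. indicator S1 \<sigma> * V c1 \<sigma>) - (LINT \<sigma>|lborel. indicator S1 \<sigma> * V c2 \<sigma>)\<bar>
      \<le> 2 * \<bar>c1 - c2\<bar> * sqrt (2/pi)" .
  show ?thesis
    unfolding Dfun_eq right_diff_distrib[symmetric] abs_mult
    by (rule mult_left_mono[OF *]) simp
qed

lemma Dfun_pz: "Dfun \<alpha> pz = 0"
proof -
  have "(\<lambda>\<sigma>. indicator S1 \<sigma> * pz \<sigma>) = (\<lambda>_. 0)"
    by (rule ext) (auto simp: S1_def pz_def indicator_def)
  then show ?thesis by (simp add: Dfun_eq)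
qed

lemma std_normal_mono: "\<bar>z\<bar> \<le> M \<Longrightarrow> std_normal_density M \<le> std_normal_density z"
  unfolding std_normal_density_def
  by (intro mult_left_mono) (auto simp: abs_le_square_iff[symmetric])

lemma V_lower:
  assumes c: "0 < c" and pq: "p \<le> q" and rng: "\<And>z. z \<in> {p..q} \<Longrightarrow> -1 < \<sigma> - c*z \<and> \<sigma> - c*z < 1"
    and M: "\<bar>p\<bar> \<le> M" "\<bar>q\<bar> \<le> M"
  shows "(q - p) * std_normal_density M / 2 \<le> V c \<sigma>"
proof -
  have "(LINT z|lborel. indicator {p..q} z * (std_normal_density M / 2)) \<le> V c \<sigma>"
    unfolding V_def
  proof (intro integral_mono V_integrable_pt)
    show "integrable lborel (\<lambda>z. indicator {p..q} z * (std_normal_density M / 2))"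
      by (intro integrable_mult_left integrable_ind_Icc)
    fix z
    show "indicator {p..q} z * (std_normal_density M / 2) \<le> pz (\<sigma> - c * z) * std_normal_density z"
    proof (cases "z \<in> {p..q}")
      case True
      then have "\<bar>z\<bar> \<le> M" using M by auto
      then have "std_normal_density M \<le> std_normal_density z" by (rule std_normal_mono)
      moreover have pzh: "pz (\<sigma> - c * z) = 1/2" using rng[OF True] by (simp add: pz_def)
      ultimately show ?thesis using True by (simp add: indicator_def pzh)
    next
      case False
      then show ?thesis by (simp add: pz_nonneg)
    qed
  qed
  then show ?thesis using pq by simp
qed

lemma Dfun_lower_window:
  assumes a: "0 \<le> \<alpha>" and lr: "l \<le> r" "{l..r} \<subseteq> S1" and L: "\<And>\<sigma>. \<sigma> \<in> {l..r} \<Longrightarrow> L \<le> V c \<sigma>"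
  shows "\<alpha> * ((r - l) * L) \<le> Dfun \<alpha> (V c)"
proof -
  have "(LINT \<sigma>|lborel. indicator {l..r} \<sigma> * L) \<le> (LINT \<sigma>|lborel. indicator S1 \<sigma> * V c \<sigma>)"
  proof (intro integral_mono integrable_ind_V)
    show "integrable lborel (\<lambda>\<sigma>. indicator {l..r} \<sigma> * L)"
      by (intro integrable_mult_left integrable_ind_Icc)
    fix \<sigma>
    show "indicator {l..r} \<sigma> * L \<le> indicator S1 \<sigma> * V c \<sigma>"
      using lr L[of \<sigma>] by (auto simp: indicator_def V_nonneg)
  qed
  then have "(r - l) * L \<le> (LINT \<sigma>|lborel. indicator S1 \<sigma> * V c \<sigma>)"
    using lr by simp
  then show ?thesis unfolding Dfun_eq using a by (rule mult_left_mono)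
qed

lemma Dfun_V_lower1:
  assumes a: "0 \<le> \<alpha>" and c: "0 < c" "c \<le> 2"
  shows "\<alpha> * c * std_normal_density 1 / 32 \<le> Dfun \<alpha> (V c)"
proof -
  have "\<alpha> * ((1 + c/2 - (1 + c/4)) * ((1 - 3/4) * std_normal_density 1 / 2)) \<le> Dfun \<alpha> (V c)"
  proof (rule Dfun_lower_window[OF a])
    show "1 + c/4 \<le> 1 + c/2" using c by simp
    show "{1 + c/4..1 + c/2} \<subseteq> S1" using c by (auto simp: S1_def)
    fix \<sigma> assume s: "\<sigma> \<in> {1 + c/4..1 + c/2}"
    show "(1 - 3/4) * std_normal_density 1 / 2 \<le> V c \<sigma>"
    proof (rule V_lower[OF c(1)])
      fix z assume z: "z \<in> {3/4..1::real}"
      have "c * z \<ge> c * (3/4)" using z c by (intro mult_left_mono) auto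
      moreover have "c * z \<le> c" using z c by (simp add: mult_le_cancel_left1)
      moreover have "1 + c/4 \<le> \<sigma>" "\<sigma> \<le> 1 + c/2" using s by auto
      ultimately show "-1 < \<sigma> - c*z \<and> \<sigma> - c*z < 1" using c by linarith
    qed auto
  qed
  then show ?thesis by (simp add: field_simps)
qed

lemma Dfun_V_pos:
  assumes a: "0 < \<alpha>" and c: "0 < c"
  shows "0 < Dfun \<alpha> (V c)"
proof -
  have "\<alpha> * ((2 - 3/2) * ((2.4/c - 1.1/c) * std_normal_density (2.4/c) / 2)) \<le> Dfun \<alpha> (V c)"
  proof (rule Dfun_lower_window)
    show "{3/2..2::real} \<subseteq> S1" by (auto simp: S1_def)
    fix \<sigma> :: real assume s: "\<sigma> \<in> {3/2..2}"
    show "(2.4/c - 1.1/c) * std_normal_density (2.4/c) / 2 \<le> V c \<sigma>"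
    proof (rule V_lower[OF c])
      fix z assume z: "z \<in> {1.1/c..2.4/c}"
      then have "1.1 \<le> c * z" "c * z \<le> 2.4" using c by (auto simp: field_simps)
      then show "-1 < \<sigma> - c*z \<and> \<sigma> - c*z < 1" using s by auto
    qed (use c in \<open>auto simp: field_simps\<close>)
  qed (use a in auto)
  moreover have "0 < \<alpha> * ((2 - 3/2) * ((2.4/c - 1.1/c) * std_normal_density (2.4/c) / 2))"
    using a c by (intro mult_pos_pos) (auto simp: normal_density_pos field_simps)
  ultimately show ?thesis by linarith
qed

lemma cont_from_bound:
  fixes f g :: "real \<Rightarrow> real"
  assumes b: "\<And>x y. \<bar>f x - f y\<bar> \<le> C * \<bar>g x - g y\<bar>" and g: "continuous_on UNIV g"
  shows "continuous_on UNIV f"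
proof (rule continuous_at_imp_continuous_on, intro ballI)
  fix x :: real
  have "((\<lambda>y. g y - g x) \<longlongrightarrow> 0) (at x)"
    using g by (simp add: LIM_zero continuous_on_eq_continuous_at isCont_def)
  then have "((\<lambda>y. C * \<bar>g y - g x\<bar>) \<longlongrightarrow> 0) (at x)"
    by (intro tendsto_mult_right_zero tendsto_rabs_zero)
  then have "((\<lambda>y. f y - f x) \<longlongrightarrow> 0) (at x)"
    by (rule Lim_null_comparison[rotated]) (use b in auto)
  then show "isCont f x"
    by (simp add: isCont_def LIM_zero_iff)
qed

locale alpha_pos =
  fixes \<alpha> :: real
  assumes apos: "0 < \<alpha>"
begin

definition Fc :: "real \<Rightarrow> real" where
  "Fc x = Dfun \<alpha> (V (sqrt (2*x)))"

lemma Fc_0: "Fc 0 = 0"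
  by (simp add: Fc_def V_0[abs_def] Dfun_pz)

lemma Fc_cont: "continuous_on UNIV Fc"
proof (rule cont_from_bound)
  show "\<bar>Fc x - Fc y\<bar> \<le> (\<bar>\<alpha>\<bar> * 2 * sqrt (2/pi)) * \<bar>sqrt (2*x) - sqrt (2*y)\<bar>" for x y
    using Dfun_V_lip[of \<alpha> "sqrt (2*x)" "sqrt (2*y)"] unfolding Fc_def by (simp add: mult_ac)
  show "continuous_on UNIV (\<lambda>x. sqrt (2*x))"
    by (intro continuous_intros)
qed

lemma Fc_meas[measurable]: "Fc \<in> borel_measurable borel"
  using Fc_cont by (rule borel_measurable_continuous_onI)

lemma Fc_pos: "0 < x \<Longrightarrow> 0 < Fc x"
  unfolding Fc_def using apos by (intro Dfun_V_pos) auto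

lemma Fc_le: "Fc x \<le> \<alpha>"
  unfolding Fc_def using apos by (intro Dfun_V_le) auto

lemma Fc_nonneg: "0 \<le> Fc x"
  unfolding Fc_def using apos by (intro Dfun_V_nonneg) auto

definition kc :: real where "kc = \<alpha> * sqrt 2 * std_normal_density 1 / 32"

lemma kc_pos: "0 < kc"
  unfolding kc_def using apos by (simp add: normal_density_pos)

lemma Fc_lower: assumes "0 < x" "x \<le> 1" shows "kc * sqrt x \<le> Fc x"
proof -
  have "sqrt (2*x) \<le> sqrt 2" using assms by simp
  also have "sqrt 2 \<le> sqrt 4" by (rule real_sqrt_le_mono) simp
  also have "sqrt 4 = (2::real)" by (simp add: real_sqrt_eq_iff[symmetric] flip: real_sqrt_abs2)
  finally have "\<alpha> * sqrt (2*x) * std_normal_density 1 / 32 \<le> Fc x"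
    unfolding Fc_def using assms apos by (intro Dfun_V_lower1) auto
  then show ?thesis by (simp add: kc_def real_sqrt_mult mult_ac)
qed

lemma Ffun_Fc: "0 \<le> x \<Longrightarrow> Ffun \<alpha> pz x = Fc x"
  by (simp add: Ffun_eq Fc_def)

end

lemma borel_to_lebesgue_on:
  "f \<in> borel_measurable borel \<Longrightarrow> f \<in> borel_measurable (lebesgue_on S)"
  by (intro measurable_restrict_space1 measurable_completion) simp

lemma ode_sol:
  fixes F :: "real \<Rightarrow> real"
  assumes Fc: "continuous_on UNIV F" and F0: "F 0 = 0"
    and Fpos: "\<And>x. 0 < x \<Longrightarrow> 0 < F x" and Fle: "\<And>x. F x \<le> B"
    and Flow: "\<And>x. 0 < x \<Longrightarrow> x \<le> 1 \<Longrightarrow> k * sqrt x \<le> F x" and k: "0 < k"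
  shows "\<exists>\<tau>. continuous_on UNIV \<tau> \<and> (\<forall>t\<le>0. \<tau> t = 0) \<and>
            (\<forall>t>0. 0 < \<tau> t \<and> (\<tau> has_real_derivative F (\<tau> t)) (at t))"
proof -
  have B: "0 < B" using Fpos[of 1] Fle[of 1] by simp
  define f where "f y = (if y \<le> 0 then 1/B else 1 / F y)" for y
  have Fm[measurable]: "F \<in> borel_measurable borel"
    using Fc by (rule borel_measurable_continuous_onI)
  have fm[measurable]: "f \<in> borel_measurable borel"
    unfolding f_def[abs_def] by measurable
  have f_ge: "1/B \<le> f y" for y
    using Fpos[of y] Fle[of y] B by (auto simp: f_def divide_simps)
  have f_cont: "continuous_on {a..b} f" if "0 < a" for a b
  proof -
    have "continuous_on {a..b} (\<lambda>y. 1 / F y)"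
    proof (intro continuous_intros continuous_on_subset[OF Fc] subset_UNIV ballI)
      fix y assume "y \<in> {a..b}"
      then have "0 < y" using that by auto
      then show "F y \<noteq> 0" using Fpos[of y] by simp
    qed
    then show ?thesis
      by (rule continuous_on_eq) (use that in \<open>auto simp: f_def\<close>)
  qed
  have int01: "f integrable_on {0..1}"
  proof -
    have "(\<lambda>y. y powr (-1/2)) integrable_on {0..1::real}"
      by (rule integrable_on_powr_from_0) auto
    from integrable_on_cmult_left[OF this, of "1/k"]
    have "(\<lambda>y. (1/k) * y powr (-1/2)) integrable_on {0..1::real}" by simp
    then have g: "(\<lambda>y. 1/B + (1/k) * y powr (-1/2)) integrable_on {0..1}"
      by (intro integrable_add) auto
    have "f absolutely_integrable_on {0..1}"
    proof (rule measurable_bounded_by_integrable_imp_absolutely_integrable[OF _ _ g])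
      show "f \<in> borel_measurable (lebesgue_on {0..1})" by (rule borel_to_lebesgue_on) simp
      fix y :: real assume y: "y \<in> {0..1}"
      show "norm (f y) \<le> 1/B + (1/k) * y powr (-1/2)"
      proof (cases "y = 0")
        case True then show ?thesis using B by (simp add: f_def)
      next
        case False
        then have y0: "0 < y" using y by auto
        have Fy: "k * sqrt y \<le> F y" using Flow[OF y0] y by auto
        have pos: "0 < k * sqrt y" using k y0 by simp
        have "f y = 1 / F y" using y0 by (simp add: f_def)
        also have "\<dots> \<le> 1 / (k * sqrt y)"
          using Fy pos by (intro divide_left_mono) auto
        also have "\<dots> = (1/k) * y powr (-1/2)"
          using y0 by (simp add: powr_minus powr_half_sqrt[symmetric] divide_simps)
        finally have "f y \<le> (1/k) * y powr (-1/2)" .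
        moreover have "0 < f y" using Fpos[OF y0] y0 by (simp add: f_def)
        moreover have "0 < 1/B" using B by simp
        ultimately show ?thesis by (simp only: real_norm_def abs_of_pos)
      qed
    qed auto
    then show ?thesis using set_lebesgue_integral_eq_integral(1) by blast
  qed
  have intX: "f integrable_on {0..X}" if "0 \<le> X" for X
  proof (cases "X \<le> 1")
    case True then show ?thesis by (intro integrable_on_subinterval[OF int01]) auto
  next
    case False
    have "f integrable_on {1..X}" by (intro integrable_continuous_interval f_cont) simp
    then show ?thesis using False int01 by (intro Henstock_Kurzweil_Integration.integrable_combine[of 0 1 X]) auto
  qed
  define G where "G x = integral {0..x} f" for x
  have G0: "G 0 = 0" by (simp add: G_def)
  have G_diff: "G y - G x = integral {x..y} f" if "0 \<le> x" "x \<le> y" for x y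
    using Henstock_Kurzweil_Integration.integral_combine[of 0 x y f] intX[of y] that by (simp add: G_def)
  have G_grow: "(y - x) / B \<le> G y - G x" if "0 \<le> x" "x \<le> y" for x y
  proof -
    have "integral {x..y} (\<lambda>_. 1/B) \<le> integral {x..y} f"
      by (intro integral_le integrable_on_subinterval[OF intX[of y]] f_ge) (use that in auto)
    then show ?thesis using that G_diff[OF that] by simp
  qed
  have G_cont: "continuous_on {0..X} G" for X
  proof (cases "0 \<le> X")
    case True
    then show ?thesis unfolding G_def by (intro indefinite_integral_continuous_1 intX)
  qed simp
  have G_deriv: "(G has_real_derivative f x) (at x)" if x: "0 < x" for x
  proof -
    have x2: "0 < x/2" "x/2 \<le> x" "x \<le> 2*x" using x by auto
    have "((\<lambda>u. integral {x/2..u} f) has_real_derivative f x) (at x within {x/2..2*x})"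
      by (rule integral_has_real_derivative[OF f_cont[OF x2(1)]]) (use x2 in simp)
    moreover have "x \<in> interior {x/2..2*x}"
      using x by (simp add: interior_atLeastAtMost_real)
    ultimately have d: "((\<lambda>u. integral {x/2..u} f) has_real_derivative f x) (at x)"
      by (simp only: at_within_interior)
    have "((\<lambda>u. G (x/2) + integral {x/2..u} f) has_real_derivative (0 + f x)) (at x)"
      by (rule DERIV_add[OF DERIV_const d])
    then have d2: "((\<lambda>u. G (x/2) + integral {x/2..u} f) has_real_derivative f x) (at x)"
      by (simp only: add_0_left)
    show ?thesis
    proof (rule has_field_derivative_transform_within_open[OF d2])
      show "open {x/2<..<2*x}" by (rule open_greaterThanLessThan)
      show "x \<in> {x/2<..<2*x}" using x by simp
      fix u assume u: "u \<in> {x/2<..<2*x}"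
      have "0 \<le> x/2" "x/2 \<le> u" using u x by auto
      from G_diff[OF this] show "G (x/2) + integral {x/2..u} f = G u" by simp
    qed
  qed
  have G_strict: "G x < G y" if "0 \<le> x" "x < y" for x y
  proof -
    have "0 < (y - x) / B" using that B by simp
    then show ?thesis using G_grow[of x y] that by linarith
  qed
  have G_ge: "x / B \<le> G x" if "0 \<le> x" for x
    using G_grow[of 0 x] that G0 by simp
  have ex: "\<exists>x. 0 \<le> x \<and> G x = t" if t: "0 \<le> t" for t
  proof -
    have "G 0 \<le> t" "t \<le> G (B*t)" "0 \<le> B*t"
      using G0 t G_ge[of "B*t"] B by auto
    from IVT'[OF this G_cont] show ?thesis by auto
  qed
  have uniq: "x = y" if "0 \<le> x" "0 \<le> y" "G x = G y" for x y
    using G_strict[of x y] G_strict[of y x] that by (cases x y rule: linorder_cases) auto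
  define tp where "tp t = (THE x. 0 \<le> x \<and> G x = t)" for t
  have tp: "0 \<le> tp t \<and> G (tp t) = t" if "0 \<le> t" for t
    unfolding tp_def by (rule theI') (use ex[OF that] uniq in blast)
  have tpG: "tp (G x) = x" if "0 \<le> x" for x
  proof -
    have "0 \<le> x / B" using that B by simp
    then have "0 \<le> G x" using G_ge[OF that] by linarith
    then show ?thesis using tp[of "G x"] that uniq[of "tp (G x)" x] by auto
  qed
  have tp_le: "tp t \<le> B * t" if "0 \<le> t" for t
    using tp[OF that] G_ge[of "tp t"] B by (auto simp: field_simps)
  have tp_cont: "continuous_on {0..N} tp" if N: "0 \<le> N" for N
  proof -
    have "continuous_on (G ` {0..B*N}) tp"
      by (rule continuous_on_inv[OF G_cont]) (auto simp: tpG)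
    moreover have "{0..N} \<subseteq> G ` {0..B*N}"
    proof
      fix t assume t: "t \<in> {0..N}"
      then have t0: "0 \<le> t" "t \<le> N" by auto
      have "B*t \<le> B*N" using t0 B by (intro mult_left_mono) auto
      then have "t = G (tp t)" "tp t \<in> {0..B*N}"
        using tp[OF t0(1)] tp_le[OF t0(1)] by auto
      then show "t \<in> G ` {0..B*N}" by blast
    qed
    ultimately show ?thesis by (rule continuous_on_subset)
  qed
  define \<tau> where "\<tau> t = tp (max t 0)" for t
  have tau_cont: "continuous_on UNIV \<tau>"
  proof (rule continuous_at_imp_continuous_on, intro ballI)
    fix t :: real
    define N where "N = max t 0 + 1"
    have "continuous_on {..<N} (\<lambda>t. tp (max t 0))"
      by (rule continuous_on_compose2[OF tp_cont[of N]])
         (auto simp: N_def intro!: continuous_intros)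
    then show "isCont \<tau> t"
      unfolding \<tau>_def[abs_def]
      by (rule continuous_on_interior) (auto simp: N_def interior_open)
  qed
  have tau0: "\<tau> t = 0" if "t \<le> 0" for t
    using tpG[of 0] G0 that by (simp add: \<tau>_def max_def)
  have tau_pos: "0 < \<tau> t" if "0 < t" for t
  proof -
    have "0 \<le> tp t" "G (tp t) = t" using tp[of t] that by auto
    then show ?thesis using that G0 by (auto simp: \<tau>_def max_def order_le_less)
  qed
  have tau_deriv: "(\<tau> has_real_derivative F (\<tau> t)) (at t)" if t: "0 < t" for t
  proof -
    have "(\<tau> has_real_derivative inverse (f (\<tau> t))) (at t)"
    proof (rule DERIV_inverse_function[where a=0 and b="t+1"])
      show "(G has_real_derivative f (\<tau> t)) (at (\<tau> t))" by (rule G_deriv[OF tau_pos[OF t]])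
      show "f (\<tau> t) \<noteq> 0" using f_ge[of "\<tau> t"] B by auto
      show "0 < t" "t < t + 1" using t by auto
      show "G (\<tau> y) = y" if "0 < y" "y < t + 1" for y
        using tp[of y] that by (simp add: \<tau>_def)
      show "isCont \<tau> t" using tau_cont by (simp add: continuous_on_eq_continuous_at)
    qed
    then show ?thesis using tau_pos[OF t] Fpos[OF tau_pos[OF t]] by (simp add: f_def)
  qed
  show ?thesis
    using tau_cont tau0 tau_pos tau_deriv by blast
qed

context alpha_pos
begin

lemma inv_Fc_bound: assumes "x \<in> {0..1}" shows "1 / Fc x \<le> (1/kc) * x powr (-1/2)"
proof (cases "x = 0")
  case True then show ?thesis by (simp add: Fc_0)
next
  case False
  then have x0: "0 < x" using assms by auto
  have Fy: "kc * sqrt x \<le> Fc x" using Fc_lower[OF x0] assms by auto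
  have pos: "0 < kc * sqrt x" using kc_pos x0 by simp
  have "1 / Fc x \<le> 1 / (kc * sqrt x)"
    using Fy pos by (intro divide_left_mono) auto
  also have "\<dots> = (1/kc) * x powr (-1/2)"
    using x0 by (simp add: powr_minus powr_half_sqrt[symmetric] divide_simps)
  finally show ?thesis .
qed

lemma nn_inv_F_finite: "(\<integral>\<^sup>+ x\<in>{0..1}. ennreal (1 / Ffun \<alpha> pz x) \<partial>lborel) < \<infinity>"
proof -
  have hi: "((\<lambda>x. (1/kc) * x powr (-1/2)) has_integral ((1/kc) * (1 powr (-1/2+1) / (-1/2+1)))) {0..1::real}"
    by (intro has_integral_mult_right has_integral_powr_from_0) auto
  have "(\<integral>\<^sup>+ x\<in>{0..1}. ennreal (1 / Ffun \<alpha> pz x) \<partial>lborel)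
      \<le> (\<integral>\<^sup>+ x. ennreal ((1/kc) * x powr (-1/2)) * indicator {0..1} x \<partial>lborel)"
  proof (intro nn_integral_mono)
    fix x :: real
    show "ennreal (1 / Ffun \<alpha> pz x) * indicator {0..1} x \<le> ennreal ((1/kc) * x powr (-1/2)) * indicator {0..1} x"
    proof (cases "x \<in> {0..1}")
      case True
      then show ?thesis using inv_Fc_bound[OF True] Ffun_Fc[of x]
        by (auto intro!: ennreal_leI)
    qed simp
  qed
  also have "\<dots> = ennreal ((1/kc) * (1 powr (-1/2+1) / (-1/2+1)))"
    by (rule nn_integral_has_integral_lebesgue'[OF _ hi]) (use kc_pos in auto)
  also have "\<dots> < \<infinity>" by simp
  finally show ?thesis .
qed

end

lemma LtoH:
  fixes h :: "real \<Rightarrow> real"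
  assumes hm: "h \<in> borel_measurable borel" and hb: "\<And>x. \<bar>h x\<bar> \<le> M"
    and h0: "\<And>x. x \<notin> {p..q} \<Longrightarrow> h x = 0"
  shows "integrable lborel h" "(LINT x|lborel. h x) = integral {p..q} h"
proof -
  have eq: "(\<lambda>x. indicator {p..q} x *\<^sub>R h x) = h"
    using h0 by (intro ext) (auto simp: indicator_def)
  have "integrable lborel (\<lambda>x. M * indicator {p..q} x)"
    by (intro integrable_mult_right integrable_ind_Icc)
  then show int: "integrable lborel h"
    by (rule Bochner_Integration.integrable_bound) (use hm hb h0 in \<open>auto simp: indicator_def intro!: AE_I2 order_trans[OF hb]\<close>)
  have si: "set_integrable lborel {p..q} h"
    unfolding set_integrable_def eq by (rule int)
  have "(LINT x|lborel. h x) = (LINT x:{p..q}|lborel. h x)"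
    unfolding set_lebesgue_integral_def eq ..
  also have "\<dots> = integral {p..q} h"
    by (rule set_borel_integral_eq_integral(2)[OF si])
  finally show "(LINT x|lborel. h x) = integral {p..q} h" .
qed

lemma deriv_from_integral:
  fixes P g :: "real \<Rightarrow> real"
  assumes g: "continuous_on UNIV g" and P: "\<And>p q. p \<le> q \<Longrightarrow> P q - P p = integral {p..q} g"
  shows "(P has_real_derivative g x) (at x)"
proof -
  have "((\<lambda>u. integral {x-1..u} g) has_real_derivative g x) (at x within {x-1..x+1})"
    by (rule integral_has_real_derivative[OF continuous_on_subset[OF g]]) auto
  moreover have "x \<in> interior {x-1..x+1}"
    by (simp add: interior_atLeastAtMost_real)
  ultimately have d: "((\<lambda>u. integral {x-1..u} g) has_real_derivative g x) (at x)"
    by (simp only: at_within_interior)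
  have "((\<lambda>u. P (x-1) + integral {x-1..u} g) has_real_derivative (0 + g x)) (at x)"
    by (rule DERIV_add[OF DERIV_const d])
  then have d2: "((\<lambda>u. P (x-1) + integral {x-1..u} g) has_real_derivative g x) (at x)"
    by (simp only: add_0_left)
  show ?thesis
  proof (rule has_field_derivative_transform_within_open[OF d2])
    show "open {x-1<..<x+1}" by (rule open_greaterThanLessThan)
    show "x \<in> {x-1<..<x+1}" by simp
    fix u assume u: "u \<in> {x-1<..<x+1}"
    then have "x - 1 \<le> u" by auto
    from P[OF this] show "P (x-1) + integral {x-1..u} g = P u" by simp
  qed
qed

definition Pg :: "real \<Rightarrow> real" where
  "Pg x = (LINT z|lborel. std_normal_density z * indicator {..x} z)"

lemma gam_cont: "continuous_on UNIV std_normal_density"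
  unfolding std_normal_density_def[abs_def] by (intro continuous_intros) auto

lemma int_gam_ind: "A \<in> sets borel \<Longrightarrow> integrable lborel (\<lambda>z. std_normal_density z * indicator A z)"
  by (rule integrable_real_mult_indicator) auto

lemma gam_Ioo: "(LINT z|lborel. std_normal_density z * indicator {p<..<q} z) = integral {p..q} std_normal_density"
proof -
  have si: "set_integrable lborel {p<..<q} std_normal_density"
    unfolding set_integrable_def using int_gam_ind[of "{p<..<q}"] by (simp add: mult.commute)
  have "(LINT z|lborel. std_normal_density z * indicator {p<..<q} z) = (LINT z:{p<..<q}|lborel. std_normal_density z)"
    unfolding set_lebesgue_integral_def by (simp add: mult.commute)
  also have "\<dots> = integral {p<..<q} std_normal_density"
    by (rule set_borel_integral_eq_integral(2)[OF si])
  also have "\<dots> = integral {p..q} std_normal_density"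
    by (rule integral_open_interval_real[symmetric])
  finally show ?thesis .
qed

lemma Pg_diff: assumes "p \<le> q" shows "Pg q - Pg p = integral {p..q} std_normal_density"
proof -
  have "Pg q - Pg p = (LINT z|lborel. std_normal_density z * indicator {..q} z - std_normal_density z * indicator {..p} z)"
    unfolding Pg_def by (rule Bochner_Integration.integral_diff[symmetric]) (auto intro: int_gam_ind)
  also have "\<dots> = (LINT z|lborel. std_normal_density z * indicator {p<..<q} z)"
  proof (rule integral_cong_AE)
    show "AE z in lborel. std_normal_density z * indicator {..q} z - std_normal_density z * indicator {..p} z
        = std_normal_density z * indicator {p<..<q} z"
      using AE_lborel_singleton[of q] by eventually_elim (use assms in \<open>auto simp: indicator_def\<close>)
  qed auto
  also have "\<dots> = integral {p..q} std_normal_density" by (rule gam_Ioo)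
  finally show ?thesis .
qed

lemma Pg_deriv: "(Pg has_real_derivative std_normal_density x) (at x)"
  by (rule deriv_from_integral[OF gam_cont Pg_diff])

lemma Pg_chain[derivative_intros]:
  "(f has_real_derivative f') (at x within S) \<Longrightarrow>
   ((\<lambda>x. Pg (f x)) has_real_derivative std_normal_density (f x) * f') (at x within S)"
  by (rule DERIV_chain2[OF Pg_deriv])

lemma Pg_cont[continuous_intros]: "continuous_on S f \<Longrightarrow> continuous_on S (\<lambda>x. Pg (f x))"
proof -
  have "continuous_on UNIV Pg"
    by (rule continuous_at_imp_continuous_on) (use Pg_deriv DERIV_isCont in blast)
  then show "continuous_on S f \<Longrightarrow> continuous_on S (\<lambda>x. Pg (f x))"
    by (rule continuous_on_compose2) auto
qed

lemma gam_deriv: "(std_normal_density has_real_derivative (- x * std_normal_density x)) (at x)"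
  unfolding std_normal_density_def[abs_def]
  by (auto intro!: derivative_eq_intros simp: power2_eq_square field_simps real_sqrt_mult_self)

lemma gam_chain[derivative_intros]:
  "(f has_real_derivative f') (at x within S) \<Longrightarrow>
   ((\<lambda>x. std_normal_density (f x)) has_real_derivative (- f x * std_normal_density (f x)) * f') (at x within S)"
  by (rule DERIV_chain2[OF gam_deriv])

lemma gam_cont2[continuous_intros]: "continuous_on S f \<Longrightarrow> continuous_on S (\<lambda>x. std_normal_density (f x))"
  by (rule continuous_on_compose2[OF gam_cont]) auto

lemma V_cf:
  assumes c: "0 < c"
  shows "V c s = (Pg ((s+1)/c) - Pg ((s-1)/c)) / 2"
proof -
  have "V c s = (LINT z|lborel. (std_normal_density z * indicator {(s-1)/c<..<(s+1)/c} z) / 2)"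
    unfolding V_def
  proof (intro Bochner_Integration.integral_cong refl)
    fix z
    have "(-1 < s - c*z \<and> s - c*z < 1) \<longleftrightarrow> ((s-1)/c < z \<and> z < (s+1)/c)"
      using c by (auto simp: field_simps)
    then show "pz (s - c * z) * std_normal_density z = std_normal_density z * indicator {(s-1)/c<..<(s+1)/c} z / 2"
      by (auto simp: pz_def indicator_def)
  qed
  also have "\<dots> = (LINT z|lborel. std_normal_density z * indicator {(s-1)/c<..<(s+1)/c} z) / 2"
    by simp
  also have "\<dots> = integral {(s-1)/c..(s+1)/c} std_normal_density / 2"
    by (simp only: gam_Ioo)
  also have "\<dots> = (Pg ((s+1)/c) - Pg ((s-1)/c)) / 2"
    using c by (subst Pg_diff) (auto simp: divide_right_mono)
  finally show ?thesis .
qed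

definition Vf :: "real \<Rightarrow> real \<Rightarrow> real" where
  "Vf c s = (Pg ((s+1)/c) - Pg ((s-1)/c)) / 2"

definition Vs :: "real \<Rightarrow> real \<Rightarrow> real" where
  "Vs c s = (std_normal_density ((s+1)/c) - std_normal_density ((s-1)/c)) / (2*c)"

definition Vss :: "real \<Rightarrow> real \<Rightarrow> real" where
  "Vss c s = ((s-1)/c * std_normal_density ((s-1)/c) - (s+1)/c * std_normal_density ((s+1)/c)) / (2*c^2)"

lemma V_Vf: "0 < c \<Longrightarrow> V c s = Vf c s"
  by (simp add: V_cf Vf_def)

lemma Vf_deriv_s: "0 < c \<Longrightarrow> ((\<lambda>\<rho>. Vf c \<rho>) has_real_derivative Vs c s) (at s)"
  unfolding Vf_def Vs_def
  by (auto intro!: derivative_eq_intros simp: field_simps)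

lemma Vs_deriv_s: "0 < c \<Longrightarrow> ((\<lambda>\<rho>. Vs c \<rho>) has_real_derivative Vss c s) (at s)"
  unfolding Vs_def Vss_def
  by (auto intro!: derivative_eq_intros simp: field_simps power2_eq_square)

lemma Vf_deriv_t:
  assumes c: "0 < c t" and dc: "(c has_real_derivative c1) (at t within X)"
  shows "((\<lambda>u. Vf (c u) s) has_real_derivative (c t * Vss (c t) s * c1)) (at t within X)"
  unfolding Vf_def Vss_def
  using c by (auto intro!: derivative_eq_intros dc simp: field_simps power2_eq_square)

lemma Vf_cont[continuous_intros]:
  "continuous_on S f \<Longrightarrow> continuous_on S g \<Longrightarrow> (\<And>x. x \<in> S \<Longrightarrow> f x \<noteq> 0) \<Longrightarrow>
   continuous_on S (\<lambda>x. Vf (f x) (g x))"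
  unfolding Vf_def by (intro continuous_intros) auto

lemma Vs_cont[continuous_intros]:
  "continuous_on S f \<Longrightarrow> continuous_on S g \<Longrightarrow> (\<And>x. x \<in> S \<Longrightarrow> f x \<noteq> 0) \<Longrightarrow>
   continuous_on S (\<lambda>x. Vs (f x) (g x))"
  unfolding Vs_def by (intro continuous_intros) auto

lemma Vss_cont[continuous_intros]:
  "continuous_on S f \<Longrightarrow> continuous_on S g \<Longrightarrow> (\<And>x. x \<in> S \<Longrightarrow> f x \<noteq> 0) \<Longrightarrow>
   continuous_on S (\<lambda>x. Vss (f x) (g x))"
  unfolding Vss_def by (intro continuous_intros) auto

lemma smooth2_D:
  assumes "smooth2 f"
  obtains f1 f2 where "continuous_on UNIV (\<lambda>z. f (fst z) (snd z))"
    "\<And>t s. ((\<lambda>\<tau>. f \<tau> s) has_real_derivative f1 t s) (at t)"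
    "\<And>t s. ((\<lambda>\<rho>. f t \<rho>) has_real_derivative f2 t s) (at s)"
    "smooth2 f1" "smooth2 f2"
  using assms by (cases rule: smooth2.cases) blast

lemma smooth2_cont: "smooth2 f \<Longrightarrow> continuous_on UNIV (\<lambda>z. f (fst z) (snd z))"
  by (erule smooth2_D) blast

lemma deriv_zero_loc:
  fixes g :: "real \<Rightarrow> real"
  assumes d: "(g has_real_derivative D) (at x)" and S: "open S" "x \<in> S" and z: "\<And>y. y \<in> S \<Longrightarrow> g y = 0"
  shows "D = 0"
proof -
  have "((\<lambda>_. 0) has_real_derivative D) (at x)"
    by (rule has_field_derivative_transform_within_open[OF d S]) (use z in auto)
  then show ?thesis using DERIV_const DERIV_unique by blast
qed

lemma bounded_cont_supp:
  fixes f :: "real \<Rightarrow> real \<Rightarrow> real"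
  assumes c: "continuous_on UNIV (\<lambda>z. f (fst z) (snd z))"
    and supp: "\<And>t s. f t s \<noteq> 0 \<Longrightarrow> a \<le> t \<and> t \<le> b \<and> \<bar>s\<bar> \<le> R"
  obtains M where "\<And>t s. \<bar>f t s\<bar> \<le> M"
proof -
  have "compact ((\<lambda>z. f (fst z) (snd z)) ` ({a..b} \<times> {-R..R}))"
    by (intro compact_continuous_image continuous_on_subset[OF c] compact_Times) auto
  then obtain M where M: "\<And>y. y \<in> (\<lambda>z. f (fst z) (snd z)) ` ({a..b} \<times> {-R..R}) \<Longrightarrow> norm y \<le> M"
    using compact_imp_bounded bounded_iff by metis
  have "\<bar>f t s\<bar> \<le> max M 0" for t s
  proof (cases "f t s = 0")
    case False
    then have "(t, s) \<in> {a..b} \<times> {-R..R}" using supp[of t s] by auto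
    then show ?thesis using M[of "f t s"] by force
  qed simp
  then show ?thesis using that by blast
qed

locale testf =
  fixes \<phi> :: "real \<Rightarrow> real \<Rightarrow> real" and a b R :: real
  assumes sm: "smooth2 \<phi>" and a0: "0 < a"
    and supp: "\<And>t s. \<phi> t s \<noteq> 0 \<Longrightarrow> a \<le> t \<and> t \<le> b \<and> \<bar>s\<bar> \<le> R"
begin

abbreviation "p1 \<equiv> pd_t \<phi>"
abbreviation "p2 \<equiv> pd_s \<phi>"
abbreviation "p22 \<equiv> pd_s (pd_s \<phi>)"

lemma derivs:
  "\<And>t s. ((\<lambda>\<tau>. \<phi> \<tau> s) has_real_derivative p1 t s) (at t)"
  "\<And>t s. ((\<lambda>\<rho>. \<phi> t \<rho>) has_real_derivative p2 t s) (at s)"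
  "\<And>t s. ((\<lambda>\<rho>. p2 t \<rho>) has_real_derivative p22 t s) (at s)"
  "smooth2 p1" "smooth2 p2" "smooth2 p22"
proof -
  obtain f1 f2 where
    d1: "\<And>t s. ((\<lambda>\<tau>. \<phi> \<tau> s) has_real_derivative f1 t s) (at t)" and
    d2: "\<And>t s. ((\<lambda>\<rho>. \<phi> t \<rho>) has_real_derivative f2 t s) (at s)" and
    s1: "smooth2 f1" and s2: "smooth2 f2"
    using smooth2_D[OF sm] by metis
  have e1: "p1 = f1" using d1 by (intro ext) (simp add: pd_t_def DERIV_imp_deriv)
  have e2: "p2 = f2" using d2 by (intro ext) (simp add: pd_s_def DERIV_imp_deriv)
  obtain g1 g2 where
    d22: "\<And>t s. ((\<lambda>\<rho>. f2 t \<rho>) has_real_derivative g2 t s) (at s)" and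
    s22: "smooth2 g2"
    using smooth2_D[OF s2] by metis
  have e22: "pd_s f2 = g2" using d22 by (intro ext) (simp add: pd_s_def DERIV_imp_deriv)
  show "\<And>t s. ((\<lambda>\<tau>. \<phi> \<tau> s) has_real_derivative p1 t s) (at t)"
    "\<And>t s. ((\<lambda>\<rho>. \<phi> t \<rho>) has_real_derivative p2 t s) (at s)"
    "\<And>t s. ((\<lambda>\<rho>. p2 t \<rho>) has_real_derivative p22 t s) (at s)"
    "smooth2 p1" "smooth2 p2" "smooth2 p22"
    using d1 d2 d22 s1 s2 s22 unfolding e1 e2 e22 by auto
qed

lemma cont0: "continuous_on UNIV (\<lambda>z. \<phi> (fst z) (snd z))" by (rule smooth2_cont[OF sm])
lemma cont1: "continuous_on UNIV (\<lambda>z. p1 (fst z) (snd z))" by (rule smooth2_cont[OF derivs(4)])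
lemma cont2: "continuous_on UNIV (\<lambda>z. p2 (fst z) (snd z))" by (rule smooth2_cont[OF derivs(5)])
lemma cont22: "continuous_on UNIV (\<lambda>z. p22 (fst z) (snd z))" by (rule smooth2_cont[OF derivs(6)])

lemma supp1: "p1 t s \<noteq> 0 \<Longrightarrow> a \<le> t \<and> t \<le> b \<and> \<bar>s\<bar> \<le> R"
proof (rule ccontr)
  assume nz: "p1 t s \<noteq> 0" and n: "\<not> (a \<le> t \<and> t \<le> b \<and> \<bar>s\<bar> \<le> R)"
  have "p1 t s = 0"
  proof (cases "R < \<bar>s\<bar>")
    case True
    show ?thesis by (rule deriv_zero_loc[OF derivs(1), of UNIV]) (use True supp in force)+
  next
    case False
    then have "t < a \<or> b < t" using n by auto
    then show ?thesis
    proof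
      assume ta: "t < a"
      show ?thesis
        by (rule deriv_zero_loc[OF derivs(1), of "{..<a}"]) (use ta supp in force)+
    next
      assume tb: "b < t"
      show ?thesis
        by (rule deriv_zero_loc[OF derivs(1), of "{b<..}"]) (use tb supp in force)+
    qed
  qed
  with nz show False by simp
qed

lemma open_absgt: "open {\<rho>::real. R < \<bar>\<rho>\<bar>}"
  by (intro open_Collect_less continuous_intros)

lemma supp2: "p2 t s \<noteq> 0 \<Longrightarrow> a \<le> t \<and> t \<le> b \<and> \<bar>s\<bar> \<le> R"
proof (rule ccontr)
  assume nz: "p2 t s \<noteq> 0" and n: "\<not> (a \<le> t \<and> t \<le> b \<and> \<bar>s\<bar> \<le> R)"
  have "p2 t s = 0"
  proof (cases "R < \<bar>s\<bar>")
    case True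
    show ?thesis by (rule deriv_zero_loc[OF derivs(2) open_absgt]) (use True supp in force)+
  next
    case False
    then have nt: "\<not> (a \<le> t \<and> t \<le> b)" using n by auto
    show ?thesis
      by (rule deriv_zero_loc[OF derivs(2), of UNIV]) (use nt supp in force)+
  qed
  with nz show False by simp
qed

lemma supp22: "p22 t s \<noteq> 0 \<Longrightarrow> a \<le> t \<and> t \<le> b \<and> \<bar>s\<bar> \<le> R"
proof (rule ccontr)
  assume nz: "p22 t s \<noteq> 0" and n: "\<not> (a \<le> t \<and> t \<le> b \<and> \<bar>s\<bar> \<le> R)"
  have "p22 t s = 0"
  proof (cases "R < \<bar>s\<bar>")
    case True
    show ?thesis by (rule deriv_zero_loc[OF derivs(3) open_absgt]) (use True supp2 in force)+
  next
    case False
    then have nt: "\<not> (a \<le> t \<and> t \<le> b)" using n by auto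
    show ?thesis
      by (rule deriv_zero_loc[OF derivs(3), of UNIV]) (use nt supp2 in force)+
  qed
  with nz show False by simp
qed

end

lemma cont_uncurry_slice:
  fixes f :: "real \<Rightarrow> real \<Rightarrow> real"
  assumes "continuous_on UNIV (\<lambda>z. f (fst z) (snd z))"
  shows "continuous_on S (f t)"
proof -
  have "continuous_on S (\<lambda>s. (\<lambda>z. f (fst z) (snd z)) (t, s))"
    by (rule continuous_on_compose2[OF assms]) (auto intro!: continuous_intros)
  then show ?thesis by simp
qed

lemma pz_int:
  fixes h :: "real \<Rightarrow> real"
  assumes h: "continuous_on UNIV h"
  shows "integrable lborel (\<lambda>s. pz s * h s)" "(LINT s|lborel. pz s * h s) = integral {-1..1} (\<lambda>s. h s / 2)"
proof -
  have "compact (h ` {-1..1})" by (intro compact_continuous_image continuous_on_subset[OF h]) auto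
  then obtain M where M: "\<And>y. y \<in> h ` {-1..1} \<Longrightarrow> norm y \<le> M"
    using compact_imp_bounded bounded_iff by metis
  have hm: "h \<in> borel_measurable borel" using h by (rule borel_measurable_continuous_onI)
  have b: "\<bar>pz s * h s\<bar> \<le> M" for s
  proof (cases "s \<in> {-1..1}")
    case True
    then have "\<bar>h s\<bar> \<le> M" using M[of "h s"] by auto
    moreover have "\<bar>pz s\<bar> \<le> 1" using pz_nonneg[of s] pz_le[of s] by auto
    ultimately have "pz s * \<bar>h s\<bar> \<le> 1 * M"
      by (intro mult_mono) (auto simp: pz_nonneg)
    then show ?thesis by (simp add: abs_mult pz_nonneg)
  next
    case False then show ?thesis using M[of "h 0"] by (auto simp: pz_def)
  qed
  have z: "s \<notin> {-1..1} \<Longrightarrow> pz s * h s = 0" for s by (auto simp: pz_def)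
  note L = LtoH[of "\<lambda>s. pz s * h s", OF _ b z]
  show "integrable lborel (\<lambda>s. pz s * h s)" using L hm by simp
  have "(LINT s|lborel. pz s * h s) = integral {-1..1} (\<lambda>s. pz s * h s)" using L hm by simp
  also have "\<dots> = integral {-1..1} (\<lambda>s. h s / 2)"
    by (rule integral_spike[of "{-1,1}"]) (auto simp: pz_def)
  finally show "(LINT s|lborel. pz s * h s) = integral {-1..1} (\<lambda>s. h s / 2)" .
qed

context testf
begin

lemma bnd0: obtains M where "\<And>t s. \<bar>\<phi> t s\<bar> \<le> M"
  using bounded_cont_supp[OF cont0 supp] by blast
lemma bnd1: obtains M where "\<And>t s. \<bar>p1 t s\<bar> \<le> M"
  using bounded_cont_supp[OF cont1 supp1] by blast
lemma bnd22: obtains M where "\<And>t s. \<bar>p22 t s\<bar> \<le> M"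
  using bounded_cont_supp[OF cont22 supp22] by blast

lemma meas0[measurable]: "(\<lambda>z. \<phi> (fst z) (snd z)) \<in> borel_measurable borel"
  using cont0 by (rule borel_measurable_continuous_onI)
lemma meas1[measurable]: "(\<lambda>z. p1 (fst z) (snd z)) \<in> borel_measurable borel"
  using cont1 by (rule borel_measurable_continuous_onI)
lemma meas22[measurable]: "(\<lambda>z. p22 (fst z) (snd z)) \<in> borel_measurable borel"
  using cont22 by (rule borel_measurable_continuous_onI)

definition P :: "real \<Rightarrow> real" where "P u = (LINT s|lborel. pz s * \<phi> u s)"

lemma P_eq: "P u = integral {-1..1} (\<lambda>s. \<phi> u s / 2)"
  unfolding P_def by (rule pz_int(2)[OF cont_uncurry_slice[OF cont0]])

lemma P_deriv: "(P has_real_derivative integral {-1..1} (\<lambda>s. p1 t s / 2)) (at t)"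
proof -
  have "((\<lambda>u. integral (cbox (-1) 1) (\<lambda>s. \<phi> u s / 2)) has_real_derivative
          integral (cbox (-1) 1) (\<lambda>s. p1 t s / 2)) (at t within UNIV)"
  proof (rule leibniz_rule_field_derivative)
    fix x :: real and s :: real
    show "((\<lambda>x. \<phi> x s / 2) has_real_derivative p1 x s / 2) (at x within UNIV)"
      using derivs(1)[of s x] by (auto intro!: derivative_eq_intros)
  next
    fix x :: real
    show "(\<lambda>s. \<phi> x s / 2) integrable_on cbox (-1) 1"
      by (intro integrable_continuous continuous_intros cont_uncurry_slice[OF cont0]) auto
  next
    have "continuous_on (UNIV \<times> cbox (-1) 1) (\<lambda>z. p1 (fst z) (snd z) / 2)"
      by (intro continuous_intros continuous_on_subset[OF cont1]) auto
    then show "continuous_on (UNIV \<times> cbox (-1) 1) (\<lambda>(x, s). p1 x s / 2)"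
      by (simp add: case_prod_beta')
  qed auto
  then show ?thesis by (simp add: P_eq[abs_def])
qed

lemma ibp:
  assumes c: "0 < c" and R': "\<bar>R\<bar> < R'"
  shows "integral {-R'..R'} (\<lambda>s. Vss c s * \<phi> t s) = integral {-R'..R'} (\<lambda>s. Vf c s * p22 t s)"
proof -
  define H where "H s = Vs c s * \<phi> t s - Vf c s * p2 t s" for s
  have "((\<lambda>s. Vss c s * \<phi> t s - Vf c s * p22 t s) has_integral (H R' - H (-R'))) {-R'..R'}"
  proof (rule fundamental_theorem_of_calculus)
    show "-R' \<le> R'" using R' by simp
    fix x assume "x \<in> {-R'..R'}"
    have "(H has_real_derivative (Vss c x * \<phi> t x + Vs c x * p2 t x - (Vs c x * p2 t x + Vf c x * p22 t x))) (at x)"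
      unfolding H_def
      by (auto intro!: derivative_eq_intros Vs_deriv_s[OF c] Vf_deriv_s[OF c] derivs(2,3))
    then show "(H has_vector_derivative (Vss c x * \<phi> t x - Vf c x * p22 t x)) (at x within {-R'..R'})"
      by (simp add: has_real_derivative_iff_has_vector_derivative[symmetric] has_field_derivative_at_within)
  qed
  moreover have "\<phi> t R' = 0" "p2 t R' = 0" "\<phi> t (-R') = 0" "p2 t (-R') = 0"
    using supp[of t R'] supp2[of t R'] supp[of t "-R'"] supp2[of t "-R'"] R' by force+
  then have "H R' = 0" "H (-R') = 0" by (auto simp: H_def)
  ultimately have "((\<lambda>s. Vss c s * \<phi> t s - Vf c s * p22 t s) has_integral 0) {-R'..R'}" by simp
  moreover have "(\<lambda>s. Vss c s * \<phi> t s) integrable_on {-R'..R'}" "(\<lambda>s. Vf c s * p22 t s) integrable_on {-R'..R'}"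
    using c by (auto intro!: integrable_continuous_interval continuous_intros
        cont_uncurry_slice[OF cont0] cont_uncurry_slice[OF cont22])
  ultimately have "integral {-R'..R'} (\<lambda>s. Vss c s * \<phi> t s) - integral {-R'..R'} (\<lambda>s. Vf c s * p22 t s) = 0"
    using integral_diff[of "\<lambda>s. Vss c s * \<phi> t s" "{-R'..R'}" "\<lambda>s. Vf c s * p22 t s"] integral_unique
    by metis
  then show ?thesis by simp
qed

end

lemma V_meas2[measurable (raw)]:
  "f \<in> M \<rightarrow>\<^sub>M borel \<Longrightarrow> g \<in> M \<rightarrow>\<^sub>M borel \<Longrightarrow> (\<lambda>x. V (f x) (g x)) \<in> borel_measurable M"
  using measurable_compose[OF measurable_Pair V_meas] by simp

lemma uncurry_meas2:
  fixes h :: "real \<Rightarrow> real \<Rightarrow> real"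
  assumes "(\<lambda>z. h (fst z) (snd z)) \<in> borel_measurable borel"
  shows "f \<in> M \<rightarrow>\<^sub>M borel \<Longrightarrow> g \<in> M \<rightarrow>\<^sub>M borel \<Longrightarrow> (\<lambda>x. h (f x) (g x)) \<in> borel_measurable M"
proof -
  have h: "(\<lambda>z. h (fst z) (snd z)) \<in> borel_measurable (borel \<Otimes>\<^sub>M borel)"
    using assms by (simp add: borel_prod)
  show "f \<in> M \<rightarrow>\<^sub>M borel \<Longrightarrow> g \<in> M \<rightarrow>\<^sub>M borel \<Longrightarrow> (\<lambda>x. h (f x) (g x)) \<in> borel_measurable M"
    using measurable_compose[OF measurable_Pair h] by simp
qed

lemma cont_fst: "continuous_on A f \<Longrightarrow> continuous_on (A \<times> B) (\<lambda>z. f (fst z))"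
  by (rule continuous_on_compose2[of A f "A \<times> B" fst]) (auto intro: continuous_intros)

lemma cont_uncurry_on: "continuous_on UNIV (\<lambda>z. h (fst z) (snd z)) \<Longrightarrow> continuous_on S (\<lambda>z. h (fst z) (snd z))"
  by (rule continuous_on_subset) auto

locale weakc = testf \<phi> a b R for \<phi> a b R +
  fixes c c' :: "real \<Rightarrow> real" and T Dm :: real
  assumes ab: "a \<le> b"
    and c_cont: "continuous_on UNIV c" and c_zero: "\<And>t. t \<le> T \<Longrightarrow> c t = 0"
    and c_pos: "\<And>t. T < t \<Longrightarrow> 0 < c t"
    and c_der: "\<And>t. T < t \<Longrightarrow> (c has_real_derivative c' t) (at t)"
    and c'_cont: "continuous_on {T<..} c'" and c'_meas[measurable]: "c' \<in> borel_measurable borel"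
    and d_bnd: "\<And>t. \<bar>c t * c' t\<bar> \<le> Dm"
begin

lemma c_meas[measurable]: "c \<in> borel_measurable borel"
  using c_cont by (rule borel_measurable_continuous_onI)

lemma phi_meas2[measurable (raw)]:
  "f \<in> M \<rightarrow>\<^sub>M borel \<Longrightarrow> g \<in> M \<rightarrow>\<^sub>M borel \<Longrightarrow> (\<lambda>x. \<phi> (f x) (g x)) \<in> borel_measurable M"
  by (rule uncurry_meas2[OF meas0])
lemma p1_meas2[measurable (raw)]:
  "f \<in> M \<rightarrow>\<^sub>M borel \<Longrightarrow> g \<in> M \<rightarrow>\<^sub>M borel \<Longrightarrow> (\<lambda>x. p1 (f x) (g x)) \<in> borel_measurable M"
  by (rule uncurry_meas2[OF meas1])
lemma p22_meas2[measurable (raw)]: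
  "f \<in> M \<rightarrow>\<^sub>M borel \<Longrightarrow> g \<in> M \<rightarrow>\<^sub>M borel \<Longrightarrow> (\<lambda>x. p22 (f x) (g x)) \<in> borel_measurable M"
  by (rule uncurry_meas2[OF meas22])

definition "R' = \<bar>R\<bar> + 1"

lemma R'_gt: "\<bar>R\<bar> < R'" by (simp add: R'_def)

definition W :: "real \<Rightarrow> real" where "W t = (LINT s|lborel. V (c t) s * \<phi> t s)"
definition I :: "real \<Rightarrow> real" where
  "I t = (LINT s|lborel. V (c t) s * (p1 t s + c t * c' t * p22 t s))"

lemma zero_out: "R' < \<bar>s\<bar> \<or> s \<notin> {-R'..R'} \<Longrightarrow> \<phi> t s = 0 \<and> p1 t s = 0 \<and> p22 t s = 0"
  using supp[of t s] supp1[of t s] supp22[of t s] R'_gt by force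

lemma W_H: "integrable lborel (\<lambda>s. V (c t) s * \<phi> t s)"
  "W t = integral {-R'..R'} (\<lambda>s. V (c t) s * \<phi> t s)"
proof -
  obtain M where M: "\<And>t s. \<bar>\<phi> t s\<bar> \<le> M" using bnd0 by blast
  have b: "\<bar>V (c t) s * \<phi> t s\<bar> \<le> M" for s
  proof -
    have "\<bar>V (c t) s\<bar> \<le> 1" using V_nonneg[of "c t" s] V_le[of "c t" s] by simp
    then have "\<bar>V (c t) s\<bar> * \<bar>\<phi> t s\<bar> \<le> 1 * M" by (intro mult_mono M) auto
    then show ?thesis by (simp add: abs_mult)
  qed
  note L = LtoH[of "\<lambda>s. V (c t) s * \<phi> t s" M "-R'" R', OF _ b]
  show "integrable lborel (\<lambda>s. V (c t) s * \<phi> t s)" by (rule L(1)) (use zero_out in auto)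
  show "W t = integral {-R'..R'} (\<lambda>s. V (c t) s * \<phi> t s)"
    unfolding W_def by (rule L(2)) (use zero_out in auto)
qed

lemma I_H: "integrable lborel (\<lambda>s. V (c t) s * (p1 t s + c t * c' t * p22 t s))"
  "I t = integral {-R'..R'} (\<lambda>s. V (c t) s * (p1 t s + c t * c' t * p22 t s))"
proof -
  obtain M1 where M1: "\<And>t s. \<bar>p1 t s\<bar> \<le> M1" using bnd1 by blast
  obtain M2 where M2: "\<And>t s. \<bar>p22 t s\<bar> \<le> M2" using bnd22 by blast
  have b: "\<bar>V (c t) s * (p1 t s + c t * c' t * p22 t s)\<bar> \<le> M1 + Dm * M2" for s
  proof -
    have "\<bar>c t * c' t * p22 t s\<bar> \<le> Dm * M2"
      unfolding abs_mult[of "c t * c' t"] by (intro mult_mono d_bnd M2) (use d_bnd[of t] in auto)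
    then have "\<bar>p1 t s + c t * c' t * p22 t s\<bar> \<le> M1 + Dm * M2"
      using M1[of t s] by linarith
    moreover have "\<bar>V (c t) s\<bar> \<le> 1" using V_nonneg[of "c t" s] V_le[of "c t" s] by simp
    ultimately have "\<bar>V (c t) s\<bar> * \<bar>p1 t s + c t * c' t * p22 t s\<bar> \<le> 1 * (M1 + Dm * M2)"
      by (intro mult_mono) auto
    then show ?thesis by (simp add: abs_mult)
  qed
  note L = LtoH[of "\<lambda>s. V (c t) s * (p1 t s + c t * c' t * p22 t s)" "M1 + Dm * M2" "-R'" R', OF _ b]
  show "integrable lborel (\<lambda>s. V (c t) s * (p1 t s + c t * c' t * p22 t s))"
    by (rule L(1)) (use zero_out in auto)
  show "I t = integral {-R'..R'} (\<lambda>s. V (c t) s * (p1 t s + c t * c' t * p22 t s))"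
    unfolding I_def by (rule L(2)) (use zero_out in auto)
qed

end

context weakc
begin

lemma W_P: "t \<le> T \<Longrightarrow> W t = P t"
  by (simp add: W_def P_def c_zero V_0[abs_def])

lemma I_low: "t \<le> T \<Longrightarrow> I t = integral {-1..1} (\<lambda>s. p1 t s / 2)"
  unfolding I_def using c_zero[of t]
  by (simp add: V_0[abs_def] pz_int(2)[OF cont_uncurry_slice[OF cont1]])

lemma W_deriv_low: assumes t: "t < T" shows "(W has_real_derivative I t) (at t)"
proof -
  have "(P has_real_derivative I t) (at t)" using P_deriv[of t] by (simp only: I_low[OF less_imp_le[OF t]])
  then show ?thesis
  proof (rule has_field_derivative_transform_within_open)
    show "open {..<T}" by simp
    show "t \<in> {..<T}" using t by simp
    fix u assume "u \<in> {..<T}" then show "P u = W u" using W_P[of u] by simp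
  qed
qed

lemma W_deriv_high: assumes t: "T < t" shows "(W has_real_derivative I t) (at t)"
proof -
  define U where "U = {T<..}"
  have U: "open U" "convex U" "t \<in> U" using t by (auto simp: U_def)
  have cU: "continuous_on U c" using c_cont by (rule continuous_on_subset) simp
  have c'U: "continuous_on U c'" using c'_cont by (simp add: U_def)
  have cnz: "\<And>x. x \<in> U \<Longrightarrow> c x \<noteq> 0" using c_pos by (auto simp: U_def less_imp_neq[symmetric])
  have "((\<lambda>u. integral (cbox (-R') R') (\<lambda>s. Vf (c u) s * \<phi> u s)) has_real_derivative
          integral (cbox (-R') R') (\<lambda>s. c t * Vss (c t) s * c' t * \<phi> t s + Vf (c t) s * p1 t s)) (at t within U)"
  proof (rule leibniz_rule_field_derivative[OF _ _ _ U(3,2)])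
    fix x s assume x: "x \<in> U"
    have dc: "(c has_real_derivative c' x) (at x within U)"
      using c_der[of x] x by (auto simp: U_def intro: has_field_derivative_at_within)
    show "((\<lambda>x. Vf (c x) s * \<phi> x s) has_real_derivative c x * Vss (c x) s * c' x * \<phi> x s + Vf (c x) s * p1 x s) (at x within U)"
      using Vf_deriv_t[OF c_pos dc, of s] derivs(1)[of s x] x
      by (auto intro!: derivative_eq_intros simp: U_def has_field_derivative_at_within)
  next
    fix x assume x: "x \<in> U"
    show "(\<lambda>s. Vf (c x) s * \<phi> x s) integrable_on cbox (-R') R'"
      using cnz[OF x] by (intro integrable_continuous continuous_intros cont_uncurry_slice[OF cont0]) auto
  next
    have "continuous_on (U \<times> cbox (-R') R')
       (\<lambda>z. c (fst z) * Vss (c (fst z)) (snd z) * c' (fst z) * \<phi> (fst z) (snd z) + Vf (c (fst z)) (snd z) * p1 (fst z) (snd z))"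
      using cnz
      by (intro continuous_intros cont_fst[OF cU] cont_fst[OF c'U] cont_uncurry_on[OF cont0]
           cont_uncurry_on[OF cont1]) auto
    then show "continuous_on (U \<times> cbox (-R') R') (\<lambda>(x, s). c x * Vss (c x) s * c' x * \<phi> x s + Vf (c x) s * p1 x s)"
      by (simp add: case_prod_beta')
  qed
  then have d1: "((\<lambda>u. integral {-R'..R'} (\<lambda>s. Vf (c u) s * \<phi> u s)) has_real_derivative
          integral {-R'..R'} (\<lambda>s. c t * Vss (c t) s * c' t * \<phi> t s + Vf (c t) s * p1 t s)) (at t)"
    unfolding cbox_interval at_within_open[OF U(3,1)] .
  have ct: "0 < c t" using c_pos t by simp
  have i1: "(\<lambda>s. Vss (c t) s * \<phi> t s) integrable_on {-R'..R'}"
    "(\<lambda>s. Vf (c t) s * p1 t s) integrable_on {-R'..R'}"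
    "(\<lambda>s. Vf (c t) s * p22 t s) integrable_on {-R'..R'}"
    using ct by (auto intro!: integrable_continuous_interval continuous_intros cont_uncurry_slice[OF cont0]
        cont_uncurry_slice[OF cont1] cont_uncurry_slice[OF cont22])
  have m1: "(\<lambda>s. (c t * c' t) * (Vss (c t) s * \<phi> t s)) integrable_on {-R'..R'}"
    using integrable_on_cmult_left[OF i1(1), of "c t * c' t"] by simp
  have m2: "(\<lambda>s. (c t * c' t) * (Vf (c t) s * p22 t s)) integrable_on {-R'..R'}"
    using integrable_on_cmult_left[OF i1(3), of "c t * c' t"] by simp
  have "integral {-R'..R'} (\<lambda>s. c t * Vss (c t) s * c' t * \<phi> t s + Vf (c t) s * p1 t s)
      = integral {-R'..R'} (\<lambda>s. (c t * c' t) * (Vss (c t) s * \<phi> t s) + Vf (c t) s * p1 t s)"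
    by (simp add: mult_ac)
  also have "\<dots> = integral {-R'..R'} (\<lambda>s. (c t * c' t) * (Vss (c t) s * \<phi> t s)) + integral {-R'..R'} (\<lambda>s. Vf (c t) s * p1 t s)"
    by (rule integral_add[OF m1 i1(2)])
  also have "\<dots> = (c t * c' t) * integral {-R'..R'} (\<lambda>s. Vss (c t) s * \<phi> t s) + integral {-R'..R'} (\<lambda>s. Vf (c t) s * p1 t s)"
    by (simp only: integral_mult_right)
  also have "\<dots> = (c t * c' t) * integral {-R'..R'} (\<lambda>s. Vf (c t) s * p22 t s) + integral {-R'..R'} (\<lambda>s. Vf (c t) s * p1 t s)"
    by (simp only: ibp[OF ct R'_gt])
  also have "\<dots> = integral {-R'..R'} (\<lambda>s. (c t * c' t) * (Vf (c t) s * p22 t s)) + integral {-R'..R'} (\<lambda>s. Vf (c t) s * p1 t s)"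
    by (simp only: integral_mult_right)
  also have "\<dots> = integral {-R'..R'} (\<lambda>s. (c t * c' t) * (Vf (c t) s * p22 t s) + Vf (c t) s * p1 t s)"
    by (rule integral_add[OF m2 i1(2), symmetric])
  also have "\<dots> = integral {-R'..R'} (\<lambda>s. V (c t) s * (p1 t s + c t * c' t * p22 t s))"
    using ct by (simp add: V_Vf algebra_simps)
  also have "\<dots> = I t" by (rule I_H(2)[symmetric])
  finally have d2: "((\<lambda>u. integral {-R'..R'} (\<lambda>s. Vf (c u) s * \<phi> u s)) has_real_derivative I t) (at t)"
    using d1 by simp
  show ?thesis
  proof (rule has_field_derivative_transform_within_open[OF d2 U(1,3)])
    fix u assume u: "u \<in> U"
    then have "0 < c u" using c_pos by (simp add: U_def)
    then show "integral {-R'..R'} (\<lambda>s. Vf (c u) s * \<phi> u s) = W u"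
      by (simp add: W_H(2) V_Vf)
  qed
qed

end

context weakc
begin

lemma W_P_bound: obtains M0 where "0 \<le> M0" "\<And>u. \<bar>W u - P u\<bar> \<le> M0 * (2 * \<bar>c u\<bar> * sqrt (2/pi))"
proof -
  obtain M where M: "\<And>t s. \<bar>\<phi> t s\<bar> \<le> M" using bnd0 by blast
  have M0: "0 \<le> M" using M[of 0 0] by linarith
  have "\<bar>W u - P u\<bar> \<le> M * (2 * \<bar>c u\<bar> * sqrt (2/pi))" for u
  proof -
    have iP: "integrable lborel (\<lambda>s. pz s * \<phi> u s)" by (rule pz_int(1)[OF cont_uncurry_slice[OF cont0]])
    have "W u - P u = (LINT s|lborel. V (c u) s * \<phi> u s - V 0 s * \<phi> u s)"
      unfolding W_def P_def V_0 by (rule Bochner_Integration.integral_diff[symmetric, OF W_H(1) iP])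
    also have "\<dots> = (LINT s|lborel. (V (c u) s - V 0 s) * \<phi> u s)"
      by (simp add: left_diff_distrib)
    finally have e: "W u - P u = (LINT s|lborel. (V (c u) s - V 0 s) * \<phi> u s)" .
    have "\<bar>LINT s|lborel. (V (c u) s - V 0 s) * \<phi> u s\<bar> \<le> (LINT s|lborel. \<bar>(V (c u) s - V 0 s) * \<phi> u s\<bar>)"
      by (rule integral_abs_bound)
    also have "\<dots> \<le> (LINT s|lborel. M * \<bar>V (c u) s - V 0 s\<bar>)"
    proof (rule integral_mono)
      show "integrable lborel (\<lambda>s. M * \<bar>V (c u) s - V 0 s\<bar>)"
        by (intro integrable_mult_right V_diff_L1(1))
      have "integrable lborel (\<lambda>s. V (c u) s * \<phi> u s - V 0 s * \<phi> u s)"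
        using W_H(1)[of u] iP unfolding V_0 by (rule Bochner_Integration.integrable_diff)
      then show "integrable lborel (\<lambda>s. \<bar>(V (c u) s - V 0 s) * \<phi> u s\<bar>)"
        by (intro integrable_abs) (simp add: left_diff_distrib)
      fix s
      show "\<bar>(V (c u) s - V 0 s) * \<phi> u s\<bar> \<le> M * \<bar>V (c u) s - V 0 s\<bar>"
        by (simp add: abs_mult mult.commute mult_right_mono M)
    qed
    also have "\<dots> = M * (LINT s|lborel. \<bar>V (c u) s - V 0 s\<bar>)" by simp
    also have "\<dots> \<le> M * (2 * \<bar>c u - 0\<bar> * sqrt (2/pi))"
      by (intro mult_left_mono V_diff_L1(2) M0)
    finally show ?thesis using e by simp
  qed
  then show ?thesis using that M0 by blast
qed

lemma W_cont_T: "isCont W T"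
proof -
  obtain M0 where M0: "0 \<le> M0" "\<And>u. \<bar>W u - P u\<bar> \<le> M0 * (2 * \<bar>c u\<bar> * sqrt (2/pi))"
    using W_P_bound by blast
  have cT: "isCont c T" using c_cont by (simp add: continuous_on_eq_continuous_at)
  have "((\<lambda>u. M0 * (2 * \<bar>c u\<bar> * sqrt (2/pi))) \<longlongrightarrow> M0 * (2 * \<bar>c T\<bar> * sqrt (2/pi))) (at T)"
    using cT by (intro tendsto_intros) (simp add: isCont_def)
  then have l0: "((\<lambda>u. M0 * (2 * \<bar>c u\<bar> * sqrt (2/pi))) \<longlongrightarrow> 0) (at T)"
    using c_zero[of T] by simp
  have "((\<lambda>u. W u - P u) \<longlongrightarrow> 0) (at T)"
    by (rule Lim_null_comparison[OF _ l0]) (use M0 in auto)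
  moreover have "(P \<longlongrightarrow> P T) (at T)"
    using DERIV_isCont[OF P_deriv] by (simp add: isCont_def)
  ultimately have "((\<lambda>u. (W u - P u) + P u) \<longlongrightarrow> 0 + P T) (at T)"
    by (rule tendsto_add)
  then show ?thesis using W_P[of T] by (simp add: isCont_def)
qed

lemma W_isCont: "isCont W t"
proof (cases t T rule: linorder_cases)
  case less then show ?thesis using DERIV_isCont[OF W_deriv_low] by blast
next
  case equal then show ?thesis using W_cont_T by simp
next
  case greater then show ?thesis using DERIV_isCont[OF W_deriv_high] by blast
qed

lemma W_out: "t \<notin> {a..b} \<Longrightarrow> W t = 0"
proof -
  assume t: "t \<notin> {a..b}"
  then have "\<And>s. \<phi> t s = 0" using supp by force
  then show "W t = 0" by (simp add: W_def)
qed

lemma I_out: "t \<notin> {a..b} \<Longrightarrow> I t = 0"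
proof -
  assume t: "t \<notin> {a..b}"
  then have "\<And>s. p1 t s = 0" "\<And>s. p22 t s = 0" using supp1 supp22 by force+
  then show "I t = 0" by (simp add: I_def)
qed

lemma I_has_int: "(I has_integral 0) {a-1..b+1}"
proof -
  have "(I has_integral (W (b+1) - W (a-1))) {a-1..b+1}"
  proof (rule fundamental_theorem_of_calculus_interior_strong[where S="{T}"])
    show "a - 1 \<le> b + 1" using ab by simp
    fix x assume "x \<in> {a-1<..<b+1} - {T}"
    then have "x < T \<or> T < x" by auto
    then have "(W has_real_derivative I x) (at x)" using W_deriv_low W_deriv_high by blast
    then show "(W has_vector_derivative I x) (at x)"
      by (simp add: has_real_derivative_iff_has_vector_derivative)
  next
    show "continuous_on {a-1..b+1} W"
      by (intro continuous_at_imp_continuous_on ballI W_isCont)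
  qed simp
  moreover have "W (b+1) = 0" "W (a-1) = 0" by (auto intro: W_out)
  ultimately show ?thesis by simp
qed

lemma weak_main:
  defines "g \<equiv> (\<lambda>(t, s). V (c t) s * (p1 t s + c t * c' t * p22 t s))"
  shows "integrable (lborel \<Otimes>\<^sub>M lborel) g \<and> integral\<^sup>L (lborel \<Otimes>\<^sub>M lborel) g = 0"
proof -
  obtain M1 where M1: "\<And>t s. \<bar>p1 t s\<bar> \<le> M1" using bnd1 by blast
  obtain M2 where M2: "\<And>t s. \<bar>p22 t s\<bar> \<le> M2" using bnd22 by blast
  define Cb where "Cb = M1 + Dm * M2"
  have gm: "g \<in> borel_measurable (lborel \<Otimes>\<^sub>M lborel)"
    unfolding g_def by measurable
  have gb: "\<bar>g z\<bar> \<le> Cb * indicator ({a..b} \<times> {-R'..R'}) z" for z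
  proof (cases z)
    case (Pair t s)
    show ?thesis
    proof (cases "z \<in> {a..b} \<times> {-R'..R'}")
      case True
      have "\<bar>c t * c' t * p22 t s\<bar> \<le> Dm * M2"
        unfolding abs_mult[of "c t * c' t"] by (intro mult_mono d_bnd M2) (use d_bnd[of t] in auto)
      then have "\<bar>p1 t s + c t * c' t * p22 t s\<bar> \<le> Cb"
        using M1[of t s] unfolding Cb_def by linarith
      moreover have "\<bar>V (c t) s\<bar> \<le> 1" using V_nonneg[of "c t" s] V_le[of "c t" s] by simp
      ultimately have "\<bar>V (c t) s\<bar> * \<bar>p1 t s + c t * c' t * p22 t s\<bar> \<le> 1 * Cb"
        by (intro mult_mono) auto
      then show ?thesis using True Pair by (simp add: g_def abs_mult)
    next
      case False
      then have "p1 t s = 0" "p22 t s = 0" using Pair supp1[of t s] supp22[of t s] R'_gt by force+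
      then show ?thesis using False Pair by (simp add: g_def)
    qed
  qed
  have fin: "emeasure (lborel \<Otimes>\<^sub>M lborel) ({a..b} \<times> {-R'..R'}) < \<infinity>"
  proof -
    have "-R' \<le> R'" using R'_gt by simp
    then show ?thesis
      using ab by (subst lborel.emeasure_pair_measure_Times) (auto simp: ennreal_mult_less_top)
  qed
  have ib: "integrable (lborel \<Otimes>\<^sub>M lborel) (\<lambda>z. Cb * indicator ({a..b} \<times> {-R'..R'}) z)"
    using fin by (intro integrable_mult_right) (auto simp: integrable_indicator_iff)
  have gi: "integrable (lborel \<Otimes>\<^sub>M lborel) g"
    by (rule Bochner_Integration.integrable_bound[OF ib gm]) (use gb in \<open>auto intro!: AE_I2 order_trans[OF gb]\<close>)
  have Ieq: "(\<lambda>t. LINT s|lborel. g (t, s)) = I"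
    by (simp add: g_def I_def[abs_def])
  have "integral\<^sup>L (lborel \<Otimes>\<^sub>M lborel) g = (LINT t|lborel. LINT s|lborel. g (t, s))"
    by (rule lborel_pair.integral_fst'[OF gi, symmetric])
  also have "\<dots> = (LINT t|lborel. I t)" by (simp add: Ieq)
  also have "\<dots> = 0"
  proof -
    have Ii: "integrable lborel I"
      using lborel_pair.integrable_fst'[OF gi] by (simp add: Ieq)
    have eq: "(\<lambda>t. indicator {a-1..b+1} t *\<^sub>R I t) = I"
    proof (rule ext)
      fix t
      show "indicator {a-1..b+1} t *\<^sub>R I t = I t"
      proof (cases "t \<in> {a-1..b+1}")
        case False
        then have "t \<notin> {a..b}" by auto
        then show ?thesis using I_out by simp
      qed simp
    qed
    have si: "set_integrable lborel {a-1..b+1} I"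
      unfolding set_integrable_def eq by (rule Ii)
    have "(LINT t|lborel. I t) = (LINT t:{a-1..b+1}|lborel. I t)"
      unfolding set_lebesgue_integral_def eq ..
    also have "\<dots> = integral {a-1..b+1} I"
      by (rule set_borel_integral_eq_integral(2)[OF si])
    also have "\<dots> = 0" using I_has_int by (rule integral_unique)
    finally show ?thesis .
  qed
  finally show ?thesis using gi by simp
qed

end

context alpha_pos
begin

definition tau0 :: "real \<Rightarrow> real" where
  "tau0 = (SOME \<tau>. continuous_on UNIV \<tau> \<and> (\<forall>t\<le>0. \<tau> t = 0) \<and>
            (\<forall>t>0. 0 < \<tau> t \<and> (\<tau> has_real_derivative Fc (\<tau> t)) (at t)))"

lemma tau0: "continuous_on UNIV tau0" "\<And>t. t \<le> 0 \<Longrightarrow> tau0 t = 0"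
  "\<And>t. 0 < t \<Longrightarrow> 0 < tau0 t" "\<And>t. 0 < t \<Longrightarrow> (tau0 has_real_derivative Fc (tau0 t)) (at t)"
proof -
  have ex: "\<exists>\<tau>. continuous_on UNIV \<tau> \<and> (\<forall>t\<le>0. \<tau> t = 0) \<and>
            (\<forall>t>0. 0 < \<tau> t \<and> (\<tau> has_real_derivative Fc (\<tau> t)) (at t))"
    by (rule ode_sol[OF Fc_cont Fc_0 Fc_pos Fc_le Fc_lower kc_pos])
  note s = someI_ex[OF ex, folded tau0_def]
  show "continuous_on UNIV tau0" "\<And>t. t \<le> 0 \<Longrightarrow> tau0 t = 0"
    "\<And>t. 0 < t \<Longrightarrow> 0 < tau0 t" "\<And>t. 0 < t \<Longrightarrow> (tau0 has_real_derivative Fc (tau0 t)) (at t)"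
    using s by auto
qed

definition cT :: "real \<Rightarrow> real \<Rightarrow> real" where "cT T t = sqrt (2 * tau0 (t - T))"
definition cT' :: "real \<Rightarrow> real \<Rightarrow> real" where
  "cT' T t = (if T < t then Fc (tau0 (t - T)) / cT T t else 0)"
definition UT :: "real \<Rightarrow> real \<Rightarrow> real \<Rightarrow> real" where "UT T t s = V (cT T t) s"

lemma tau0_meas[measurable]: "tau0 \<in> borel_measurable borel"
  using tau0(1) by (rule borel_measurable_continuous_onI)

lemma cT_cont: "continuous_on UNIV (cT T)"
  unfolding cT_def[abs_def]
  by (intro continuous_intros continuous_on_compose2[OF tau0(1)]) auto

lemma cT_zero: "t \<le> T \<Longrightarrow> cT T t = 0"
  by (simp add: cT_def tau0(2))

lemma cT_pos: "T < t \<Longrightarrow> 0 < cT T t"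
  using tau0(3)[of "t - T"] by (simp add: cT_def)

lemma cT_der: assumes t: "T < t" shows "(cT T has_real_derivative cT' T t) (at t)"
proof -
  have p: "0 < tau0 (t - T)" using tau0(3)[of "t - T"] t by simp
  have d: "((\<lambda>t. tau0 (t - T)) has_real_derivative Fc (tau0 (t - T))) (at t)"
  proof -
    have p0: "0 < t - T" using t by simp
    have "((\<lambda>t. t - T) has_real_derivative 1) (at t)" by (auto intro!: derivative_eq_intros)
    from DERIV_chain2[where g="\<lambda>t. t - T" and x=t, OF tau0(4)[OF p0] this]
    show ?thesis by simp
  qed
  have "((\<lambda>t. sqrt (2 * tau0 (t - T))) has_real_derivative
          inverse (sqrt (2 * tau0 (t - T))) / 2 * (2 * Fc (tau0 (t - T)))) (at t)"
  proof -
    have p2: "0 < 2 * tau0 (t - T)" using p by simp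
    show ?thesis
      using DERIV_chain2[where g="\<lambda>t. 2 * tau0 (t - T)" and x=t, OF DERIV_real_sqrt[OF p2] DERIV_cmult[OF d, of 2]]
      by simp
  qed
  then show ?thesis
    using t by (simp add: cT_def[abs_def] cT'_def field_simps)
qed

lemma cT'_cont: "continuous_on {T<..} (cT' T)"
proof -
  have "continuous_on {T<..} (\<lambda>t. Fc (tau0 (t - T)) / cT T t)"
    using cT_pos
    by (intro continuous_intros continuous_on_compose2[OF Fc_cont] continuous_on_compose2[OF tau0(1)]
        continuous_on_subset[OF cT_cont]) (auto simp: less_imp_neq[symmetric])
  then show ?thesis by (rule continuous_on_eq) (auto simp: cT'_def)
qed

lemma cT_meas[measurable]: "cT T \<in> borel_measurable borel"
  using cT_cont by (rule borel_measurable_continuous_onI)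

lemma cT'_meas[measurable]: "cT' T \<in> borel_measurable borel"
  unfolding cT'_def[abs_def] by measurable

lemma cc'_eq: "cT T t * cT' T t = Dfun \<alpha> (UT T t)"
proof (cases "T < t")
  case True
  then have "0 < cT T t" by (rule cT_pos)
  then show ?thesis using True tau0(3)[of "t - T"]
    by (simp add: cT'_def UT_def[abs_def] Fc_def cT_def)
next
  case False
  then show ?thesis by (simp add: cT'_def UT_def[abs_def] cT_zero V_0[abs_def] Dfun_pz)
qed

lemma d_bnd: "\<bar>cT T t * cT' T t\<bar> \<le> \<alpha>"
  unfolding cc'_eq UT_def[abs_def]
  using Dfun_V_nonneg[of \<alpha> "cT T t"] Dfun_V_le[of \<alpha> "cT T t"] apos by simp

end

lemma V_sq_diff:
  "integrable lborel (\<lambda>s. (V c1 s - V c2 s)\<^sup>2)"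
  "(LINT s|lborel. (V c1 s - V c2 s)\<^sup>2) \<le> 2 * \<bar>c1 - c2\<bar> * sqrt (2/pi)"
proof -
  have b: "(V c1 s - V c2 s)\<^sup>2 \<le> \<bar>V c1 s - V c2 s\<bar>" for s
  proof -
    have "\<bar>V c1 s - V c2 s\<bar> \<le> 1"
      using V_nonneg[of c1 s] V_le[of c1 s] V_nonneg[of c2 s] V_le[of c2 s] by linarith
    then have "\<bar>V c1 s - V c2 s\<bar> * \<bar>V c1 s - V c2 s\<bar> \<le> 1 * \<bar>V c1 s - V c2 s\<bar>"
      by (intro mult_right_mono) auto
    then show ?thesis by (simp add: power2_eq_square abs_mult[symmetric])
  qed
  show i: "integrable lborel (\<lambda>s. (V c1 s - V c2 s)\<^sup>2)"
    by (rule Bochner_Integration.integrable_bound[OF V_diff_L1(1)]) (auto intro!: AE_I2 order_trans[OF _ b])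
  have "(LINT s|lborel. (V c1 s - V c2 s)\<^sup>2) \<le> (LINT s|lborel. \<bar>V c1 s - V c2 s\<bar>)"
    by (intro integral_mono i V_diff_L1(1) b)
  also have "\<dots> \<le> 2 * \<bar>c1 - c2\<bar> * sqrt (2/pi)" by (rule V_diff_L1(2))
  finally show "(LINT s|lborel. (V c1 s - V c2 s)\<^sup>2) \<le> 2 * \<bar>c1 - c2\<bar> * sqrt (2/pi)" .
qed

context alpha_pos
begin

lemma UT_C0: "C0_L2 (UT T)"
  unfolding C0_L2_def
proof (intro conjI allI impI)
  fix t :: real
  show "UT T t \<in> borel_measurable lborel" by (simp add: UT_def[abs_def])
  have "integrable lborel (\<lambda>s. (V (cT T t) s - V 0 s + V 0 s)\<^sup>2)"
  proof -
    have "integrable lborel (\<lambda>s. (V (cT T t) s)\<^sup>2)"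
    proof (rule Bochner_Integration.integrable_bound[OF integrable_V])
      show "AE s in lborel. norm ((V (cT T t) s)\<^sup>2) \<le> norm (V (cT T t) s)"
      proof (intro AE_I2)
        fix s
        have "V (cT T t) s * V (cT T t) s \<le> 1 * V (cT T t) s"
          using V_nonneg[of "cT T t" s] V_le[of "cT T t" s] by (intro mult_right_mono) auto
        then show "norm ((V (cT T t) s)\<^sup>2) \<le> norm (V (cT T t) s)"
          using V_nonneg[of "cT T t" s] by (simp add: power2_eq_square)
      qed
    qed simp
    then show ?thesis by simp
  qed
  then show "integrable lborel (\<lambda>s. (UT T t s)\<^sup>2)" by (simp add: UT_def)
next
  fix t0 :: real
  have cc: "isCont (cT T) t0" using cT_cont by (simp add: continuous_on_eq_continuous_at)
  have "((\<lambda>t. 2 * \<bar>cT T t - cT T t0\<bar> * sqrt (2/pi)) \<longlongrightarrow> 2 * \<bar>cT T t0 - cT T t0\<bar> * sqrt (2/pi)) (at t0)"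
    using cc by (intro tendsto_intros) (simp add: isCont_def)
  then have l0: "((\<lambda>t. 2 * \<bar>cT T t - cT T t0\<bar> * sqrt (2/pi)) \<longlongrightarrow> 0) (at t0)" by simp
  have "((\<lambda>t. LINT s|lborel. (UT T t s - UT T t0 s)\<^sup>2) \<longlongrightarrow> 0) (at t0)"
  proof (rule Lim_null_comparison[OF _ l0])
    show "\<forall>\<^sub>F t in at t0. norm (LINT s|lborel. (UT T t s - UT T t0 s)\<^sup>2) \<le> 2 * \<bar>cT T t - cT T t0\<bar> * sqrt (2/pi)"
    proof (intro always_eventually allI)
      fix t
      have "0 \<le> (LINT s|lborel. (V (cT T t) s - V (cT T t0) s)\<^sup>2)"
        by (intro integral_nonneg_AE AE_I2) simp
      then show "norm (LINT s|lborel. (UT T t s - UT T t0 s)\<^sup>2) \<le> 2 * \<bar>cT T t - cT T t0\<bar> * sqrt (2/pi)"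
        using V_sq_diff(2)[of "cT T t" "cT T t0"] by (simp add: UT_def)
    qed
  qed
  then show "((\<lambda>t. LINT s|lborel. (UT T t s - UT T t0 s)\<^sup>2) \<longlongrightarrow> 0) (at t0 within {0..})"
    by (rule tendsto_mono[OF at_le, rotated]) simp
qed

lemma UT_sol:
  assumes T: "0 \<le> T"
  shows "is_solution \<alpha> pz (UT T)"
  unfolding is_solution_def
proof (intro conjI allI impI)
  show "C0_L2 (UT T)" by (rule UT_C0)
  fix t :: real
  show "integrable lborel (UT T t)" by (simp add: UT_def[abs_def] integrable_V)
next
  show "AE s in lborel. UT T 0 s = pz s"
    using T by (simp add: UT_def cT_zero V_0)
next
  fix \<phi> assume tf: "test_fun \<phi>"
  then obtain a b R where sm: "smooth2 \<phi>" and a0: "0 < a"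
    and supp: "\<And>t s. \<phi> t s \<noteq> 0 \<Longrightarrow> a \<le> t \<and> t \<le> b \<and> \<bar>s\<bar> \<le> R"
    unfolding test_fun_def by blast
  have wk: "weakc \<phi> a (max a b) R (cT T) (cT' T) T \<alpha>"
  proof unfold_locales
    show "smooth2 \<phi>" by (rule sm)
    show "0 < a" by (rule a0)
    fix t s assume "\<phi> t s \<noteq> 0"
    then show "a \<le> t \<and> t \<le> max a b \<and> \<bar>s\<bar> \<le> R" using supp[of t s] by auto
  next
    show "a \<le> max a b" by simp
    show "continuous_on UNIV (cT T)" by (rule cT_cont)
    show "continuous_on {T<..} (cT' T)" by (rule cT'_cont)
    show "cT' T \<in> borel_measurable borel" by (rule cT'_meas)
  next
    fix t
    show "t \<le> T \<Longrightarrow> cT T t = 0" by (rule cT_zero)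
    show "T < t \<Longrightarrow> 0 < cT T t" by (rule cT_pos)
    show "T < t \<Longrightarrow> (cT T has_real_derivative cT' T t) (at t)" by (rule cT_der)
    show "\<bar>cT T t * cT' T t\<bar> \<le> \<alpha>" by (rule d_bnd)
  qed
  have eqg: "(\<lambda>(t, s). UT T t s * (pd_t \<phi> t s + Dfun \<alpha> (UT T t) * pd_s (pd_s \<phi>) t s))
      = (\<lambda>(t, s). V (cT T t) s * (pd_t \<phi> t s + cT T t * cT' T t * pd_s (pd_s \<phi>) t s))"
    by (simp add: cc'_eq UT_def)
  show "let g = (\<lambda>(t, s). UT T t s * (pd_t \<phi> t s + Dfun \<alpha> (UT T t) * pd_s (pd_s \<phi>) t s))
         in integrable (lborel \<Otimes>\<^sub>M lborel) g \<and> integral\<^sup>L (lborel \<Otimes>\<^sub>M lborel) g = 0"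
    unfolding Let_def eqg by (rule weakc.weak_main[OF wk])
qed

lemma UT_distinct:
  assumes T: "0 \<le> T1" "T1 < T2"
  shows "(LINT s|lborel. (UT T1 T2 s - UT T2 T2 s)\<^sup>2) \<noteq> 0"
proof
  define c where "c = cT T1 T2"
  have c: "0 < c" unfolding c_def using T by (intro cT_pos) simp
  have z: "cT T2 T2 = 0" by (rule cT_zero) simp
  assume "(LINT s|lborel. (UT T1 T2 s - UT T2 T2 s)\<^sup>2) = 0"
  then have "(LINT s|lborel. (V c s - V 0 s)\<^sup>2) = 0" by (simp add: UT_def c_def z)
  then have "AE s in lborel. (V c s - V 0 s)\<^sup>2 = 0"
    using integral_nonneg_eq_0_iff_AE[OF V_sq_diff(1)] by simp
  then have ae: "AE s in lborel. indicator S1 s * V c s = indicator S1 s * V 0 s"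
    by eventually_elim simp
  have "(LINT s|lborel. indicator S1 s * V c s) = (LINT s|lborel. indicator S1 s * V 0 s)"
    by (rule integral_cong_AE[OF _ _ ae]) auto
  then have "Dfun \<alpha> (V c) = Dfun \<alpha> pz" by (simp add: Dfun_eq V_0[abs_def])
  then show False using Dfun_V_pos[OF apos c] Dfun_pz by simp
qed

end

theorem corollary4p1:
  fixes \<alpha> :: real and p0 :: "real \<Rightarrow> real"
  assumes "\<alpha> > 0"
    and "p0 = (\<lambda>\<sigma>. indicator {-1<..<1} \<sigma> / 2)"
  shows "integrable lborel p0
    \<and> (\<exists>C. AE \<sigma> in lborel. \<bar>p0 \<sigma>\<bar> \<le> C)
    \<and> (\<forall>\<sigma>. p0 \<sigma> \<ge> 0)
    \<and> (LINT \<sigma>|lborel. p0 \<sigma>) = 1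
    \<and> integrable lborel (\<lambda>\<sigma>. \<bar>\<sigma>\<bar> * p0 \<sigma>)
    \<and> Dfun \<alpha> p0 = 0
    \<and> (\<integral>\<^sup>+ x\<in>{0..1}. ennreal (1 / Ffun \<alpha> p0 x) \<partial>lborel) < \<infinity>
    \<and> (\<exists>U :: nat \<Rightarrow> real \<Rightarrow> real \<Rightarrow> real.
         (\<forall>n. is_solution \<alpha> p0 (U n)) \<and>
         (\<forall>n m. n \<noteq> m \<longrightarrow> (\<exists>t\<ge>0. (LINT s|lborel. (U n t s - U m t s)\<^sup>2) \<noteq> 0)))"
proof -
  interpret alpha_pos \<alpha> by unfold_locales (rule assms(1))
  have p0: "p0 = pz" using assms(2) by (simp add: pz_def[abs_def])
  have i5: "integrable lborel (\<lambda>\<sigma>. \<bar>\<sigma>\<bar> * pz \<sigma>)"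
  proof (rule Bochner_Integration.integrable_bound[OF integrable_ind_Icc[of "-1" 1]])
    show "AE x in lborel. norm (\<bar>x\<bar> * pz x) \<le> norm (indicator {-1..1::real} x :: real)"
      by (intro AE_I2) (auto simp: pz_def indicator_def)
  qed simp
  have U: "\<exists>U :: nat \<Rightarrow> real \<Rightarrow> real \<Rightarrow> real.
         (\<forall>n. is_solution \<alpha> pz (U n)) \<and>
         (\<forall>n m. n \<noteq> m \<longrightarrow> (\<exists>t\<ge>0. (LINT s|lborel. (U n t s - U m t s)\<^sup>2) \<noteq> 0))"
  proof (intro exI[of _ "\<lambda>n. UT (real n)"] conjI allI impI)
    fix n show "is_solution \<alpha> pz (UT (real n))" by (rule UT_sol) simp
  next
    fix n m :: nat assume nm: "n \<noteq> m"
    show "\<exists>t\<ge>0. (LINT s|lborel. (UT (real n) t s - UT (real m) t s)\<^sup>2) \<noteq> 0"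
    proof (cases "n < m")
      case True
      then show ?thesis using UT_distinct[of "real n" "real m"] by (intro exI[of _ "real m"]) auto
    next
      case False
      then have "m < n" using nm by simp
      then have "(LINT s|lborel. (UT (real m) (real n) s - UT (real n) (real n) s)\<^sup>2) \<noteq> 0"
        using UT_distinct[of "real m" "real n"] by simp
      then have "(LINT s|lborel. (UT (real n) (real n) s - UT (real m) (real n) s)\<^sup>2) \<noteq> 0"
        by (simp add: power2_commute)
      then show ?thesis by (intro exI[of _ "real n"]) auto
    qed
  qed
  show ?thesis
    unfolding p0
    using integrable_pz pz_nonneg pz_le integral_pz i5 Dfun_pz nn_inv_F_finite U
    by (auto intro!: exI[of _ "1/2"] AE_I2 simp: abs_of_nonneg)
qed

end
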